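(* Satisfiability and finite satisfiability of $\mathrm{LTL}(\sim)$ are logspace-reducible to $\mathbf{\Delta^3_0}$.
   Context: Let $\mathrm{AP}$ be a countably infinite set of atomic propositions. A trace is an infinite sequence $t=t(0)t(1)\cdots\in(\wp\mathrm{AP})^\omega$, and $t^i=t(i)t(i+1)\cdots$. A team is a (possibly empty) set $T$ of traces, and $T^i=\{t^i: t\in T\}$. Formulas of $\mathrm{LTL}(\sim)$ are given by $\varphi::=p\mid\neg\varphi\mid\varphi\wedge\varphi\mid\varphi\vee\varphi\mid\mathsf X\varphi\mid\mathsf F\varphi\mid\mathsf G\varphi\mid\varphi\,\mathsf U\,\varphi\mid\varphi\,\mathsf R\,\varphi\mid{\sim}\varphi$ with $p\in\mathrm{AP}$. Synchronous team semantics: $T\models p$ iff $p\in t(0)$ for all $t\in T$; $T\models\neg\varphi$ iff $\{t\}\not\models\varphi$ for all $t\in T$; $T\models\varphi\wedge\psi$ iff $T\models\varphi$ and $T\models\psi$; $T\models\varphi\vee\psi$ iff $T=S\cup U$ for some $S,U$ with $S\models\varphi$ and $U\models\psi$; $T\models\mathsf X\varphi$ iff $T^1\models\varphi$; $T\models\mathsf F\varphi$ iff $T^k\models\varphi$ for some $k\ge0$; $T\models\mathsf G\varphi$ iff $T^k\models\varphi$ for all $k\ge0$; $T\models\varphi\,\mathsf U\,\psi$ iff there is $k\ge0$ with $T^k\models\psi$ and $T^j\models\varphi$ for all $j<k$; $T\models\varphi\,\mathsf R\,\psi$ iff for all $k\ge0$, $T^k\models\psi$ or $T^j\models\varphi$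 for some $j<k$; $T\models{\sim}\varphi$ iff $T\not\models\varphi$. A finite Kripke structure is $K=(W,R,\eta,r)$ with $W$ finite nonempty, $R\subseteq W\times W$ serial, $\eta:W\to\wp\mathrm{AP}$ with finite labels, and root $r\in W$; a path is $\pi\in W^\omega$ with $\pi(0)=r$ and $(\pi(i),\pi(i+1))\in R$; it induces the trace $(\eta(\pi(i)))_{i\ge0}$; $T(K)$ is the team of all induced traces. Satisfiability: the set of formulas satisfied by some team. Finite satisfiability: the set of formulas satisfied by $T(K)$ for some finite Kripke structure $K$. $\mathbf{\Delta^3_0}$ denotes the set of closed formulas of third-order arithmetic (vocabulary $+,\times,0,1,=,\le$; first-order variables range over $\mathbb N$, second-order variables of arity $n$ over subsets of $\mathbb N^n$, third-order variables of type $(n_1,\dots,n_k)$ over subsets of $\wp(\mathbb N^{n_1})\times\cdots\times\wp(\mathbb N^{n_k})$, with atoms $\mathfrak a(A_1,\dots,A_k)$) that are true in the standard model $\mathbb N$. *)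

theory Defs
  imports Complex_Main
begin

section \<open>LTL with Boolean negation (~) under synchronous team semantics\<close>

datatype ltl =
    Prop nat
  | Neg ltl
  | Conj ltl ltl
  | Disj ltl ltl
  | Next ltl
  | Fut ltl
  | Glob ltl
  | Until ltl ltl
  | Rel ltl ltl
  | BNeg ltl   (* the Boolean negation ~ *)

type_synonym trace = "nat \<Rightarrow> nat set"

definition suffix :: "nat \<Rightarrow> trace \<Rightarrow> trace" where
  "suffix i t = (\<lambda>j. t (i + j))"

definition tsuffix :: "nat \<Rightarrow> trace set \<Rightarrow> trace set" where
  "tsuffix i T = suffix i ` T"

primrec tsat :: "trace set \<Rightarrow> ltl \<Rightarrow> bool" where
  "tsat T (Prop p) = (\<forall>t\<in>T. p \<in> t 0)"
| "tsat T (Neg \<phi>) = (\<forall>t\<in>T. \<not> tsat {t} \<phi>)"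
| "tsat T (Conj \<phi> \<psi>) = (tsat T \<phi> \<and> tsat T \<psi>)"
| "tsat T (Disj \<phi> \<psi>) = (\<exists>S U. T = S \<union> U \<and> tsat S \<phi> \<and> tsat U \<psi>)"
| "tsat T (Next \<phi>) = tsat (tsuffix 1 T) \<phi>"
| "tsat T (Fut \<phi>) = (\<exists>k. tsat (tsuffix k T) \<phi>)"
| "tsat T (Glob \<phi>) = (\<forall>k. tsat (tsuffix k T) \<phi>)"
| "tsat T (Until \<phi> \<psi>) = (\<exists>k. tsat (tsuffix k T) \<psi> \<and> (\<forall>j<k. tsat (tsuffix j T) \<phi>))"
| "tsat T (Rel \<phi> \<psi>) = (\<forall>k. tsat (tsuffix k T) \<psi> \<or> (\<exists>j<k. tsat (tsuffix j T) \<phi>))"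
| "tsat T (BNeg \<phi>) = (\<not> tsat T \<phi>)"

text \<open>Finite Kripke structures (worlds taken from nat; every finite structure is
  isomorphic to one of this form).\<close>

definition finite_kripke :: "nat set \<Rightarrow> (nat \<times> nat) set \<Rightarrow> (nat \<Rightarrow> nat set) \<Rightarrow> nat \<Rightarrow> bool" where
  "finite_kripke W R \<eta> r \<longleftrightarrow>
     finite W \<and> W \<noteq> {} \<and> R \<subseteq> W \<times> W \<and> (\<forall>w\<in>W. \<exists>v. (w, v) \<in> R)
     \<and> (\<forall>w\<in>W. finite (\<eta> w)) \<and> r \<in> W"

definition kripke_team :: "(nat \<times> nat) set \<Rightarrow> (nat \<Rightarrow> nat set) \<Rightarrow> nat \<Rightarrow> trace set" where
  "kripke_team R \<eta> r =
     {(\<lambda>i. \<eta> (\<pi> i)) | \<pi>. \<pi> 0 = r \<and> (\<forall>i. (\<pi> i, \<pi> (Suc i)) \<in> R)}"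

definition LTL_SAT :: "ltl set" where
  "LTL_SAT = {\<phi>. \<exists>T. tsat T \<phi>}"

definition LTL_FINSAT :: "ltl set" where
  "LTL_FINSAT = {\<phi>. \<exists>W R \<eta> r. finite_kripke W R \<eta> r \<and> tsat (kripke_team R \<eta> r) \<phi>}"

section \<open>Third-order arithmetic\<close>

datatype aterm = TVar nat | TZero | TOne | TPlus aterm aterm | TTimes aterm aterm

text \<open>Second-order variables are identified by (name, arity); third-order variables
  by (name, type (n1,...,nk)).\<close>

datatype aform =
    AEq aterm aterm
  | ALe aterm aterm
  | AMem2 nat nat "aterm list"
  | AMem3 nat "nat list" "(nat \<times> nat) list"
  | ANot aform
  | AAnd aform aform
  | AOr aform aform
  | AEx1 nat aform
  | AAll1 nat aform
  | AEx2 nat nat aform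
  | AAll2 nat nat aform
  | AEx3 nat "nat list" aform
  | AAll3 nat "nat list" aform

record asg =
  v1 :: "nat \<Rightarrow> nat"
  v2 :: "nat \<Rightarrow> nat \<Rightarrow> nat list set"
  v3 :: "nat \<Rightarrow> nat list \<Rightarrow> nat list set list set"

definition dom2 :: "nat \<Rightarrow> nat list set set" where
  "dom2 n = {A. \<forall>xs\<in>A. length xs = n}"

definition dom3 :: "nat list \<Rightarrow> nat list set list set set" where
  "dom3 ns = {\<AA>. \<forall>As\<in>\<AA>. length As = length ns \<and> (\<forall>i<length ns. As ! i \<in> dom2 (ns ! i))}"

primrec evalt :: "asg \<Rightarrow> aterm \<Rightarrow> nat" where
  "evalt \<sigma> (TVar x) = v1 \<sigma> x"
| "evalt \<sigma> TZero = 0"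
| "evalt \<sigma> TOne = 1"
| "evalt \<sigma> (TPlus s t) = evalt \<sigma> s + evalt \<sigma> t"
| "evalt \<sigma> (TTimes s t) = evalt \<sigma> s * evalt \<sigma> t"

primrec asat :: "asg \<Rightarrow> aform \<Rightarrow> bool" where
  "asat \<sigma> (AEq s t) = (evalt \<sigma> s = evalt \<sigma> t)"
| "asat \<sigma> (ALe s t) = (evalt \<sigma> s \<le> evalt \<sigma> t)"
| "asat \<sigma> (AMem2 X n ts) = (length ts = n \<and> map (evalt \<sigma>) ts \<in> v2 \<sigma> X n)"
| "asat \<sigma> (AMem3 a ns Xs) = (map snd Xs = ns \<and> map (\<lambda>(X, m). v2 \<sigma> X m) Xs \<in> v3 \<sigma> a ns)"
| "asat \<sigma> (ANot \<phi>) = (\<not> asat \<sigma> \<phi>)"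
| "asat \<sigma> (AAnd \<phi> \<psi>) = (asat \<sigma> \<phi> \<and> asat \<sigma> \<psi>)"
| "asat \<sigma> (AOr \<phi> \<psi>) = (asat \<sigma> \<phi> \<or> asat \<sigma> \<psi>)"
| "asat \<sigma> (AEx1 x \<phi>) = (\<exists>k. asat (\<sigma>\<lparr>v1 := (v1 \<sigma>)(x := k)\<rparr>) \<phi>)"
| "asat \<sigma> (AAll1 x \<phi>) = (\<forall>k. asat (\<sigma>\<lparr>v1 := (v1 \<sigma>)(x := k)\<rparr>) \<phi>)"
| "asat \<sigma> (AEx2 X n \<phi>) =
     (\<exists>A\<in>dom2 n. asat (\<sigma>\<lparr>v2 := (v2 \<sigma>)(X := (v2 \<sigma> X)(n := A))\<rparr>) \<phi>)"
| "asat \<sigma> (AAll2 X n \<phi>) =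
     (\<forall>A\<in>dom2 n. asat (\<sigma>\<lparr>v2 := (v2 \<sigma>)(X := (v2 \<sigma> X)(n := A))\<rparr>) \<phi>)"
| "asat \<sigma> (AEx3 a ns \<phi>) =
     (\<exists>\<AA>\<in>dom3 ns. asat (\<sigma>\<lparr>v3 := (v3 \<sigma>)(a := (v3 \<sigma> a)(ns := \<AA>))\<rparr>) \<phi>)"
| "asat \<sigma> (AAll3 a ns \<phi>) =
     (\<forall>\<AA>\<in>dom3 ns. asat (\<sigma>\<lparr>v3 := (v3 \<sigma>)(a := (v3 \<sigma> a)(ns := \<AA>))\<rparr>) \<phi>)"

primrec tfv :: "aterm \<Rightarrow> nat set" where
  "tfv (TVar x) = {x}"
| "tfv TZero = {}"
| "tfv TOne = {}"
| "tfv (TPlus s t) = tfv s \<union> tfv t"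
| "tfv (TTimes s t) = tfv s \<union> tfv t"

primrec fv1 :: "aform \<Rightarrow> nat set" where
  "fv1 (AEq s t) = tfv s \<union> tfv t"
| "fv1 (ALe s t) = tfv s \<union> tfv t"
| "fv1 (AMem2 X n ts) = \<Union> (set (map tfv ts))"
| "fv1 (AMem3 a ns Xs) = {}"
| "fv1 (ANot \<phi>) = fv1 \<phi>"
| "fv1 (AAnd \<phi> \<psi>) = fv1 \<phi> \<union> fv1 \<psi>"
| "fv1 (AOr \<phi> \<psi>) = fv1 \<phi> \<union> fv1 \<psi>"
| "fv1 (AEx1 x \<phi>) = fv1 \<phi> - {x}"
| "fv1 (AAll1 x \<phi>) = fv1 \<phi> - {x}"
| "fv1 (AEx2 X n \<phi>) = fv1 \<phi>"
| "fv1 (AAll2 X n \<phi>) = fv1 \<phi>"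
| "fv1 (AEx3 a ns \<phi>) = fv1 \<phi>"
| "fv1 (AAll3 a ns \<phi>) = fv1 \<phi>"

primrec fv2 :: "aform \<Rightarrow> (nat \<times> nat) set" where
  "fv2 (AEq s t) = {}"
| "fv2 (ALe s t) = {}"
| "fv2 (AMem2 X n ts) = {(X, n)}"
| "fv2 (AMem3 a ns Xs) = set Xs"
| "fv2 (ANot \<phi>) = fv2 \<phi>"
| "fv2 (AAnd \<phi> \<psi>) = fv2 \<phi> \<union> fv2 \<psi>"
| "fv2 (AOr \<phi> \<psi>) = fv2 \<phi> \<union> fv2 \<psi>"
| "fv2 (AEx1 x \<phi>) = fv2 \<phi>"
| "fv2 (AAll1 x \<phi>) = fv2 \<phi>"
| "fv2 (AEx2 X n \<phi>) = fv2 \<phi> - {(X, n)}"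
| "fv2 (AAll2 X n \<phi>) = fv2 \<phi> - {(X, n)}"
| "fv2 (AEx3 a ns \<phi>) = fv2 \<phi>"
| "fv2 (AAll3 a ns \<phi>) = fv2 \<phi>"

primrec fv3 :: "aform \<Rightarrow> (nat \<times> nat list) set" where
  "fv3 (AEq s t) = {}"
| "fv3 (ALe s t) = {}"
| "fv3 (AMem2 X n ts) = {}"
| "fv3 (AMem3 a ns Xs) = {(a, ns)}"
| "fv3 (ANot \<phi>) = fv3 \<phi>"
| "fv3 (AAnd \<phi> \<psi>) = fv3 \<phi> \<union> fv3 \<psi>"
| "fv3 (AOr \<phi> \<psi>) = fv3 \<phi> \<union> fv3 \<psi>"
| "fv3 (AEx1 x \<phi>) = fv3 \<phi>"
| "fv3 (AAll1 x \<phi>) = fv3 \<phi>"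
| "fv3 (AEx2 X n \<phi>) = fv3 \<phi>"
| "fv3 (AAll2 X n \<phi>) = fv3 \<phi>"
| "fv3 (AEx3 a ns \<phi>) = fv3 \<phi> - {(a, ns)}"
| "fv3 (AAll3 a ns \<phi>) = fv3 \<phi> - {(a, ns)}"

definition closed :: "aform \<Rightarrow> bool" where
  "closed \<phi> \<longleftrightarrow> fv1 \<phi> = {} \<and> fv2 \<phi> = {} \<and> fv3 \<phi> = {}"

text \<open>A (well-typed) default assignment; truth of closed formulas does not depend on it.\<close>
definition asg0 :: asg where
  "asg0 = \<lparr>v1 = (\<lambda>_. 0), v2 = (\<lambda>_ _. {}), v3 = (\<lambda>_ _. {})\<rparr>"

definition Delta30 :: "aform set" where
  "Delta30 = {\<phi>. closed \<phi> \<and> asat asg0 \<phi>}"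

section \<open>Binary encodings of formulas\<close>

fun bin :: "nat \<Rightarrow> bool list" where
  "bin n = (if n < 2 then [n = 1] else bin (n div 2) @ [odd n])"

definition tok :: "nat \<Rightarrow> bool list" where
  "tok n = [odd (n div 8), odd (n div 4), odd (n div 2), odd n]"

definition num :: "nat \<Rightarrow> bool list" where
  "num n = concat (map (\<lambda>b. tok (if b then 1 else 0)) (bin n)) @ tok 15"

definition enc_list :: "('a \<Rightarrow> bool list) \<Rightarrow> 'a list \<Rightarrow> bool list" where
  "enc_list f xs = num (length xs) @ concat (map f xs)"

primrec enc_ltl :: "ltl \<Rightarrow> bool list" where
  "enc_ltl (Prop p) = tok 2 @ num p"
| "enc_ltl (Neg \<phi>) = tok 3 @ enc_ltl \<phi>"
| "enc_ltl (Conj \<phi> \<psi>) = tok 4 @ enc_ltl \<phi> @ enc_ltl \<psi>"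
| "enc_ltl (Disj \<phi> \<psi>) = tok 5 @ enc_ltl \<phi> @ enc_ltl \<psi>"
| "enc_ltl (Next \<phi>) = tok 6 @ enc_ltl \<phi>"
| "enc_ltl (Fut \<phi>) = tok 7 @ enc_ltl \<phi>"
| "enc_ltl (Glob \<phi>) = tok 8 @ enc_ltl \<phi>"
| "enc_ltl (Until \<phi> \<psi>) = tok 9 @ enc_ltl \<phi> @ enc_ltl \<psi>"
| "enc_ltl (Rel \<phi> \<psi>) = tok 10 @ enc_ltl \<phi> @ enc_ltl \<psi>"
| "enc_ltl (BNeg \<phi>) = tok 11 @ enc_ltl \<phi>"

primrec enc_term :: "aterm \<Rightarrow> bool list" where
  "enc_term (TVar x) = tok 2 @ num x"
| "enc_term TZero = tok 3"
| "enc_term TOne = tok 4"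
| "enc_term (TPlus s t) = tok 5 @ enc_term s @ enc_term t"
| "enc_term (TTimes s t) = tok 6 @ enc_term s @ enc_term t"

primrec enc_aform :: "aform \<Rightarrow> bool list" where
  "enc_aform (AEq s t) = tok 2 @ enc_term s @ enc_term t"
| "enc_aform (ALe s t) = tok 3 @ enc_term s @ enc_term t"
| "enc_aform (AMem2 X n ts) = tok 4 @ num X @ num n @ num (length ts) @ concat (map enc_term ts)"
| "enc_aform (AMem3 a ns Xs) =
     tok 5 @ num a @ enc_list num ns @ enc_list (\<lambda>(X, m). num X @ num m) Xs"
| "enc_aform (ANot \<phi>) = tok 6 @ enc_aform \<phi>"
| "enc_aform (AAnd \<phi> \<psi>) = tok 7 @ enc_aform \<phi> @ enc_aform \<psi>"
| "enc_aform (AOr \<phi> \<psi>) = tok 8 @ enc_aform \<phi> @ enc_aform \<psi>"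
| "enc_aform (AEx1 x \<phi>) = tok 9 @ num x @ enc_aform \<phi>"
| "enc_aform (AAll1 x \<phi>) = tok 10 @ num x @ enc_aform \<phi>"
| "enc_aform (AEx2 X n \<phi>) = tok 11 @ num X @ num n @ enc_aform \<phi>"
| "enc_aform (AAll2 X n \<phi>) = tok 12 @ num X @ num n @ enc_aform \<phi>"
| "enc_aform (AEx3 a ns \<phi>) = tok 13 @ num a @ enc_list num ns @ enc_aform \<phi>"
| "enc_aform (AAll3 a ns \<phi>) = tok 14 @ num a @ enc_list num ns @ enc_aform \<phi>"

section \<open>Logspace transducers and logspace reductions\<close>

text \<open>Deterministic Turing transducer: two-way read-only input tape with end markers
  (position 0 and length+1), k one-way-infinite work tapes over alphabet 0..<nsyms
  (0 = blank), and a write-only one-way output tape over bool.\<close>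

record tm =
  nstates :: nat
  nsyms :: nat
  ntapes :: nat
  delta :: "nat \<Rightarrow> bool option \<Rightarrow> nat list \<Rightarrow> nat \<times> int \<times> (nat \<times> int) list \<times> bool option"
  start :: nat
  halt :: nat

record conf =
  st :: nat
  ipos :: nat
  wt :: "(nat \<Rightarrow> nat) list"
  wpos :: "nat list"
  outp :: "bool list"

definition wf_tm :: "tm \<Rightarrow> bool" where
  "wf_tm M \<longleftrightarrow> start M < nstates M \<and> halt M < nstates M \<and> 0 < nsyms M \<and>
     (\<forall>q a ss. q < nstates M \<and> q \<noteq> halt M \<and> length ss = ntapes M \<and> (\<forall>s\<in>set ss. s < nsyms M) \<longrightarrow>
        (case delta M q a ss of (q', di, ws, ob) \<Rightarrow>
           q' < nstates M \<and> di \<in> {-1, 0, 1} \<and> length ws = ntapes M \<and>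
           (\<forall>(s, d)\<in>set ws. s < nsyms M \<and> d \<in> {-1, 0, 1})))"

definition inp_sym :: "bool list \<Rightarrow> nat \<Rightarrow> bool option" where
  "inp_sym x i = (if 1 \<le> i \<and> i \<le> length x then Some (x ! (i - 1)) else None)"

definition init_conf :: "tm \<Rightarrow> conf" where
  "init_conf M = \<lparr>st = start M, ipos = 0, wt = replicate (ntapes M) (\<lambda>_. 0),
                  wpos = replicate (ntapes M) 0, outp = []\<rparr>"

definition step :: "tm \<Rightarrow> bool list \<Rightarrow> conf \<Rightarrow> conf" where
  "step M x c =
    (if st c = halt M then c else
     (case delta M (st c) (inp_sym x (ipos c)) (map2 (\<lambda>t p. t p) (wt c) (wpos c)) of
       (q', di, ws, ob) \<Rightarrow>
         \<lparr>st = q',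
          ipos = min (length x + 1) (nat (int (ipos c) + di)),
          wt = map2 (\<lambda>(t, p) (s, d). t(p := s)) (zip (wt c) (wpos c)) ws,
          wpos = map2 (\<lambda>p (s, d). nat (int p + d)) (wpos c) ws,
          outp = outp c @ (case ob of None \<Rightarrow> [] | Some b \<Rightarrow> [b])\<rparr>))"

definition run :: "tm \<Rightarrow> bool list \<Rightarrow> nat \<Rightarrow> conf" where
  "run M x n = (step M x ^^ n) (init_conf M)"

definition logspace_computes :: "tm \<Rightarrow> (bool list \<Rightarrow> bool list) \<Rightarrow> bool" where
  "logspace_computes M f \<longleftrightarrow>
     (\<exists>c::nat. \<forall>x.
        (\<exists>n. st (run M x n) = halt M \<and> outp (run M x n) = f x) \<and>
        (\<forall>m. \<forall>p\<in>set (wpos (run M x m)). real p \<le> real c * log 2 (real (length x) + 2)))"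

definition logspace_reducible :: "bool list set \<Rightarrow> bool list set \<Rightarrow> bool" where
  "logspace_reducible A B \<longleftrightarrow>
     (\<exists>M f. wf_tm M \<and> logspace_computes M f \<and> (\<forall>x. x \<in> A \<longleftrightarrow> f x \<in> B))"

end

theory Submission
  imports Defs
begin



declare bin.simps[simp del]

lemma tok_simps[simp]:
  "tok 0 = [False,False,False,False]" "tok 1 = [False,False,False,True]"
  "tok 2 = [False,False,True,False]" "tok 3 = [False,False,True,True]"
  "tok 4 = [False,True,False,False]" "tok 5 = [False,True,False,True]"
  "tok 6 = [False,True,True,False]" "tok 7 = [False,True,True,True]"
  "tok 8 = [True,False,False,False]" "tok 9 = [True,False,False,True]"
  "tok 10 = [True,False,True,False]" "tok 11 = [True,False,True,True]"
  "tok 12 = [True,True,False,False]" "tok 13 = [True,True,False,True]"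
  "tok 14 = [True,True,True,False]" "tok 15 = [True,True,True,True]"
  by (simp_all add: tok_def)

lemma tok_Suc0[simp]: "tok (Suc 0) = [False,False,False,True]" by (simp add: tok_def)

definition dig :: "bool \<Rightarrow> bool list" where
  "dig b = tok (if b then 1 else 0)"

lemma dig_simps[simp]: "dig True = tok 1" "dig False = tok 0" by (simp_all add: dig_def)

lemma num_dig: "num n = concat (map dig (bin n)) @ tok 15"
proof -
  have "dig = (\<lambda>b. tok (if b then 1 else 0))" by (rule ext) (simp add: dig_def)
  then show ?thesis unfolding num_def by simp
qed

lemma digs_prefix:
  "(concat (map dig bs) @ tok 15 @ r = concat (map dig cs) @ tok 15 @ r') \<longleftrightarrow> bs = cs \<and> r = r'"
proof (induction bs arbitrary: cs)
  case Nil then show ?case by (cases cs) (auto simp: dig_def split: if_splits)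
next
  case (Cons b bs) then show ?case
    by (cases cs) (auto simp: dig_def split: if_splits)
qed

definition bval :: "bool list \<Rightarrow> nat" where
  "bval bs = foldl (\<lambda>m b. 2 * m + (if b then 1 else 0)) 0 bs"

lemma bval_snoc[simp]: "bval (bs @ [b]) = 2 * bval bs + (if b then 1 else 0)"
  by (simp add: bval_def)

lemma bval_bin[simp]: "bval (bin n) = n"
proof (induction n rule: bin.induct)
  case (1 n)
  show ?case
  proof (cases "n < 2")
    case True then show ?thesis by (subst bin.simps) (auto simp: bval_def)
  next
    case False
    then have "bin n = bin (n div 2) @ [odd n]" by (subst bin.simps) simp
    with 1 False show ?thesis by simp
  qed
qed

lemma bin_inj: "bin a = bin b \<Longrightarrow> a = b"
  by (metis bval_bin)

lemma num_prefix[simp]: "(num a @ r = num b @ r') \<longleftrightarrow> a = b \<and> r = r'"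
  using digs_prefix[of "bin a" r "bin b" r'] bin_inj by (auto simp: num_dig)

lemma num_prefix2[simp]: "(num a @ r = num b) \<longleftrightarrow> a = b \<and> r = []"
  using num_prefix[of a r b "[]"] by simp
lemma num_prefix3[simp]: "(num a = num b @ r) \<longleftrightarrow> a = b \<and> r = []"
  using num_prefix[of a "[]" b r] by auto
lemma num_eq[simp]: "(num a = num b) \<longleftrightarrow> a = b"
  using num_prefix[of a "[]" b "[]"] by auto

definition pfree :: "('a \<Rightarrow> bool list) \<Rightarrow> bool" where
  "pfree f \<longleftrightarrow> (\<forall>a b r r'. (f a @ r = f b @ r') \<longleftrightarrow> a = b \<and> r = r')"

lemma concat_pfree:
  assumes "pfree f" "length xs = length ys"
  shows "(concat (map f xs) @ r = concat (map f ys) @ r') \<longleftrightarrow> xs = ys \<and> r = r'"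
  using assms(2)
proof (induction xs arbitrary: ys)
  case Nil then show ?case by simp
next
  case (Cons x xs) then show ?case using assms(1)
    by (cases ys) (auto simp: pfree_def)
qed

lemma pfree_num: "pfree num" by (simp add: pfree_def)

lemma enc_list_pfree:
  assumes "pfree f" shows "pfree (enc_list f)"
  unfolding pfree_def enc_list_def
proof (intro allI)
  fix a b r r'
  show "((num (length a) @ concat (map f a)) @ r = (num (length b) @ concat (map f b)) @ r') =
          (a = b \<and> r = r')"
  proof (cases "length a = length b")
    case True then show ?thesis using concat_pfree[OF assms True] by simp
  next
    case False then show ?thesis by auto
  qed
qed

lemma pfree_pair: "pfree (\<lambda>(X, m). num X @ num m)"
  by (auto simp: pfree_def)

lemma enc_term_prefix[simp]: "(enc_term s @ r = enc_term t @ r') \<longleftrightarrow> s = t \<and> r = r'"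
proof (induction s arbitrary: t r r')
  case (TVar x) then show ?case by (cases t) auto
next
  case TZero then show ?case by (cases t) auto
next
  case TOne then show ?case by (cases t) auto
next
  case (TPlus s1 s2) then show ?case by (cases t) auto
next
  case (TTimes s1 s2) then show ?case by (cases t) auto
qed

lemma pfree_term: "pfree enc_term" by (simp add: pfree_def)

lemma enc_list_num_prefix[simp]:
  "(enc_list num a @ r = enc_list num b @ r') \<longleftrightarrow> a = b \<and> r = r'"
  using enc_list_pfree[OF pfree_num] by (simp add: pfree_def)

lemma enc_list_pair_prefix[simp]:
  "(enc_list (\<lambda>(X, m). num X @ num m) a @ r = enc_list (\<lambda>(X, m). num X @ num m) b @ r') \<longleftrightarrow> a = b \<and> r = r'"
  using enc_list_pfree[OF pfree_pair] by (simp add: pfree_def)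

lemma terms_prefix:
  "(num (length a) @ concat (map enc_term a) @ r = num (length b) @ concat (map enc_term b) @ r')
     \<longleftrightarrow> a = b \<and> r = r'"
  using enc_list_pfree[OF pfree_term] by (simp add: pfree_def enc_list_def)

lemma enc_prefix[simp]: "(enc_aform s @ r = enc_aform t @ r') \<longleftrightarrow> s = t \<and> r = r'"
proof (induction s arbitrary: t r r')
  case (AMem2 X n ts) then show ?case using concat_pfree[OF pfree_term] by (cases t) (auto simp: terms_prefix)
qed (case_tac t; auto)+

lemma enc_prefix2[simp]: "(enc_aform s @ r = enc_aform t) \<longleftrightarrow> s = t \<and> r = []"
  using enc_prefix[of s r t "[]"] by simp
lemma enc_eq[simp]: "(enc_aform s = enc_aform t) \<longleftrightarrow> s = t"
  using enc_prefix[of s "[]" t "[]"] by simp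




definition imp :: "aform \<Rightarrow> aform \<Rightarrow> aform" where "imp a b = AOr (ANot a) b"
definition iff :: "aform \<Rightarrow> aform \<Rightarrow> aform" where "iff a b = AAnd (imp a b) (imp b a)"
definition mem3 :: "nat \<Rightarrow> nat \<Rightarrow> aform" where "mem3 a X = AMem3 a [2] [(X, 2)]"
definition Eq3 :: "nat \<Rightarrow> nat \<Rightarrow> aform" where
  "Eq3 a b = AAll2 0 2 (iff (mem3 a 0) (mem3 b 0))"
definition Union3 :: "nat \<Rightarrow> nat \<Rightarrow> nat \<Rightarrow> aform" where
  "Union3 a b c = AAll2 0 2 (iff (mem3 a 0) (AOr (mem3 b 0) (mem3 c 0)))"
definition shift :: "nat \<Rightarrow> nat \<Rightarrow> aterm \<Rightarrow> aform" where
  "shift X Y t = AAll1 2 (AAll1 3 (iff (AMem2 X 2 [TVar 2, TVar 3]) (AMem2 Y 2 [TPlus (TVar 2) t, TVar 3])))"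
definition Suff :: "nat \<Rightarrow> nat \<Rightarrow> aterm \<Rightarrow> aform" where
  "Suff a b t = AAll2 0 2 (iff (mem3 a 0) (AEx2 1 2 (AAnd (mem3 b 1) (shift 0 1 t))))"
definition Single :: "nat \<Rightarrow> nat \<Rightarrow> aform" where
  "Single a X = AAll2 1 2 (iff (mem3 a 1) (shift 1 X TZero))"
definition Leaf :: aform where
  "Leaf = AAll2 0 2 (imp (mem3 0 0) (AMem2 0 2 [TZero, TVar 4]))"
definition GR :: "aform \<Rightarrow> aform" where "GR a = AEx3 0 [2] (AAnd (Eq3 0 2) a)"
definition sel1 :: "aform \<Rightarrow> aform" where "sel1 a = AEx3 0 [2] (AAnd (Eq3 0 1) a)"
definition bitt :: "bool \<Rightarrow> aterm" where "bitt b = (if b then TOne else TZero)"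

definition Ez :: aform where "Ez = AEq (TVar 4) TZero"
definition Eb :: "bool \<Rightarrow> aform" where "Eb b = AEq (TVar 5) (TPlus (TPlus (TVar 4) (TVar 4)) (bitt b))"
definition E45 :: aform where "E45 = AEq (TVar 4) (TVar 5)"
definition Le01 :: aform where "Le01 = ALe (TVar 0) (TVar 1)"

primrec Chain :: "bool list \<Rightarrow> aform" where
  "Chain [] = Leaf"
| "Chain (b # bs) = AEx1 5 (AAnd (Eb b) (AEx1 4 (AAnd E45 (Chain bs))))"

primrec tr0 :: "ltl \<Rightarrow> aform" where
  "tr0 (Prop p) = AEx1 4 (AAnd Ez (Chain (bin p)))"
| "tr0 (Neg \<phi>) = AAll2 0 2 (imp (mem3 0 0) (AEx3 0 [2] (AAnd (Single 0 0) (ANot (tr0 \<phi>)))))"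
| "tr0 (Conj \<phi> \<psi>) = AEx3 2 [2] (AAnd (Eq3 2 0) (AAnd (tr0 \<phi>) (GR (tr0 \<psi>))))"
| "tr0 (Disj \<phi> \<psi>) = AEx3 1 [2] (AEx3 2 [2] (AAnd (Union3 0 1 2) (AAnd (sel1 (tr0 \<phi>)) (GR (tr0 \<psi>)))))"
| "tr0 (Next \<phi>) = AEx3 1 [2] (AAnd (Suff 1 0 TOne) (sel1 (tr0 \<phi>)))"
| "tr0 (Fut \<phi>) = AEx1 0 (AEx3 1 [2] (AAnd (Suff 1 0 (TVar 0)) (sel1 (tr0 \<phi>))))"
| "tr0 (Glob \<phi>) = AAll1 0 (AEx3 1 [2] (AAnd (Suff 1 0 (TVar 0)) (sel1 (tr0 \<phi>))))"
| "tr0 (Until \<phi> \<psi>) = AEx1 0 (AEx3 2 [2] (AAnd (Suff 2 0 (TVar 0))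
      (AAnd (AAll1 1 (AOr Le01 (AEx3 1 [2] (AAnd (Suff 1 0 (TVar 1)) (sel1 (tr0 \<phi>))))))
            (GR (tr0 \<psi>)))))"
| "tr0 (Rel \<phi> \<psi>) = AAll1 0 (AEx3 2 [2] (AAnd (Suff 2 0 (TVar 0))
      (AOr (AEx1 1 (AAnd (ANot Le01) (AEx3 1 [2] (AAnd (Suff 1 0 (TVar 1)) (sel1 (tr0 \<phi>))))))
           (GR (tr0 \<psi>)))))"
| "tr0 (BNeg \<phi>) = ANot (tr0 \<phi>)"

section \<open>Coding of traces and teams\<close>

definition ctr :: "trace \<Rightarrow> nat list set" where "ctr t = {[i, p] | i p. p \<in> t i}"
definition dtr :: "nat list set \<Rightarrow> trace" where "dtr A = (\<lambda>i. {p. [i, p] \<in> A})"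
definition cT :: "trace set \<Rightarrow> nat list set list set" where "cT T = {[ctr t] | t. t \<in> T}"
definition decT :: "nat list set list set \<Rightarrow> trace set" where "decT X = {dtr A | A. [A] \<in> X}"

lemma dtr_ctr[simp]: "dtr (ctr t) = t" by (auto simp: dtr_def ctr_def)
lemma ctr_dom2[simp]: "ctr t \<in> dom2 2" by (auto simp: dom2_def ctr_def)
lemma ctr_dtr: "A \<in> dom2 2 \<Longrightarrow> ctr (dtr A) = A"
  apply (auto simp: dom2_def ctr_def dtr_def)
  subgoal for x by (cases x rule: remdups_adj.cases) auto
  done
lemma ctr_inj[simp]: "ctr t = ctr u \<longleftrightarrow> t = u" by (metis dtr_ctr)
lemma cT_dom3[simp]: "cT T \<in> dom3 [2]" by (auto simp: dom3_def cT_def)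
lemma decT_cT[simp]: "decT (cT T) = T"
  by (auto simp: decT_def cT_def) (metis dtr_ctr)
lemma cT_decT: "X \<in> dom3 [2] \<Longrightarrow> cT (decT X) = X"
proof
  assume X: "X \<in> dom3 [2]"
  have L: "As \<in> X \<Longrightarrow> \<exists>A. As = [A] \<and> A \<in> dom2 2" for As
    using X by (auto simp: dom3_def length_Suc_conv)
  show "cT (decT X) \<subseteq> X"
    using L by (auto simp: cT_def decT_def) (metis ctr_dtr list.inject)
  show "X \<subseteq> cT (decT X)"
  proof
    fix As assume "As \<in> X"
    with L obtain A where "As = [A]" "A \<in> dom2 2" by blast
    then show "As \<in> cT (decT X)" using \<open>As \<in> X\<close> unfolding cT_def decT_def
      by (auto intro!: exI[of _ "dtr A"] simp: ctr_dtr)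
  qed
qed
lemma mem_cT[simp]: "[ctr t] \<in> cT T \<longleftrightarrow> t \<in> T" by (auto simp: cT_def)

lemma all_dom2: "(\<forall>A\<in>dom2 2. P A) \<longleftrightarrow> (\<forall>t. P (ctr t))"
  by (metis ctr_dom2 ctr_dtr)
lemma ex_dom2: "(\<exists>A\<in>dom2 2. P A) \<longleftrightarrow> (\<exists>t. P (ctr t))"
  by (metis ctr_dom2 ctr_dtr)
lemma all_dom3: "(\<forall>X\<in>dom3 [2]. P X) \<longleftrightarrow> (\<forall>T. P (cT T))"
  by (metis cT_dom3 cT_decT)
lemma ex_dom3: "(\<exists>X\<in>dom3 [2]. P X) \<longleftrightarrow> (\<exists>T. P (cT T))"
  by (metis cT_dom3 cT_decT)




lemma evalt_cong: "(\<And>x. x \<in> tfv t \<Longrightarrow> v1 \<sigma> x = v1 \<sigma>' x) \<Longrightarrow> evalt \<sigma> t = evalt \<sigma>' t"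
  by (induction t) auto

lemma evalt_v2[simp]: "evalt (\<sigma>\<lparr>v2 := f\<rparr>) t = evalt \<sigma> t"
  by (rule evalt_cong) simp
lemma evalt_v3[simp]: "evalt (\<sigma>\<lparr>v3 := f\<rparr>) t = evalt \<sigma> t"
  by (rule evalt_cong) simp
lemma evalt_v1_other[simp]: "x \<notin> tfv t \<Longrightarrow> evalt (\<sigma>\<lparr>v1 := (v1 \<sigma>)(x := k)\<rparr>) t = evalt \<sigma> t"
  by (rule evalt_cong) auto

lemma mem_ctr[simp]: "[i, p] \<in> ctr t \<longleftrightarrow> p \<in> t i" by (auto simp: ctr_def)

lemma mem3_sem[simp]: "asat \<sigma> (mem3 a X) \<longleftrightarrow> [v2 \<sigma> X 2] \<in> v3 \<sigma> a [2]"
  by (simp add: mem3_def)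
lemma imp_sem[simp]: "asat \<sigma> (imp a b) \<longleftrightarrow> (asat \<sigma> a \<longrightarrow> asat \<sigma> b)" by (simp add: imp_def)
lemma iff_sem[simp]: "asat \<sigma> (iff a b) \<longleftrightarrow> (asat \<sigma> a \<longleftrightarrow> asat \<sigma> b)" by (auto simp: iff_def)

lemma Eq3_sem:
  assumes "v3 \<sigma> a [2] = cT S" "v3 \<sigma> b [2] = cT U"
  shows "asat \<sigma> (Eq3 a b) \<longleftrightarrow> S = U"
  using assms by (auto simp: Eq3_def all_dom2)

lemma Union3_sem:
  assumes "v3 \<sigma> a [2] = cT S" "v3 \<sigma> b [2] = cT U" "v3 \<sigma> c [2] = cT V"
  shows "asat \<sigma> (Union3 a b c) \<longleftrightarrow> S = U \<union> V"
  using assms by (auto simp: Union3_def all_dom2)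

lemma shift_sem:
  assumes "2 \<notin> tfv t" "3 \<notin> tfv t"
  shows "asat \<sigma> (shift X Y t) \<longleftrightarrow> (\<forall>i p. [i, p] \<in> v2 \<sigma> X 2 \<longleftrightarrow> [i + evalt \<sigma> t, p] \<in> v2 \<sigma> Y 2)"
proof -
  have "\<And>k ka. evalt (\<sigma>\<lparr>v1 := (v1 \<sigma>)(2 := k, 3 := ka)\<rparr>) t = evalt \<sigma> t"
    by (rule evalt_cong) (use assms in auto)
  then show ?thesis by (simp add: shift_def)
qed

lemma same_tr[simp]: "(\<forall>i p. p \<in> u i \<longleftrightarrow> p \<in> t i) \<longleftrightarrow> u = t"
  by (auto simp: fun_eq_iff)

lemma suffix_eq: "(\<forall>i p. p \<in> t i \<longleftrightarrow> p \<in> u (i + k)) \<longleftrightarrow> t = suffix k u"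
  by (auto simp: suffix_def add.commute fun_eq_iff)

lemma Suff_sem:
  assumes "v3 \<sigma> a [2] = cT S" "v3 \<sigma> b [2] = cT U" "2 \<notin> tfv t" "3 \<notin> tfv t"
  shows "asat \<sigma> (Suff a b t) \<longleftrightarrow> S = tsuffix (evalt \<sigma> t) U"
proof -
  have "asat \<sigma> (Suff a b t) \<longleftrightarrow> (\<forall>t'. t' \<in> S \<longleftrightarrow> (\<exists>u. u \<in> U \<and> t' = suffix (evalt \<sigma> t) u))"
    using assms by (simp add: Suff_def all_dom2 ex_dom2 shift_sem suffix_eq) (simp add: suffix_def add.commute)
  also have "\<dots> \<longleftrightarrow> S = tsuffix (evalt \<sigma> t) U"
    by (auto simp: tsuffix_def)
  finally show ?thesis .
qed

lemma Single_sem: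
  assumes "v3 \<sigma> a [2] = cT S" "v2 \<sigma> X 2 = ctr t" "X \<noteq> 1"
  shows "asat \<sigma> (Single a X) \<longleftrightarrow> S = {t}"
proof -
  have "asat \<sigma> (Single a X) \<longleftrightarrow> (\<forall>u. u \<in> S \<longleftrightarrow> u = suffix 0 t)"
    using assms by (simp add: Single_def all_dom2 shift_sem suffix_eq) (simp add: suffix_def)
  also have "suffix 0 t = t" by (simp add: suffix_def)
  finally show ?thesis by auto
qed

lemma Leaf_sem:
  assumes "v3 \<sigma> 0 [2] = cT S"
  shows "asat \<sigma> Leaf \<longleftrightarrow> (\<forall>t\<in>S. v1 \<sigma> 4 \<in> t 0)"
  using assms by (auto simp: Leaf_def all_dom2)

definition bstep :: "nat \<Rightarrow> bool \<Rightarrow> nat" where "bstep m b = 2 * m + (if b then 1 else 0)"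

lemma Chain_sem:
  assumes "v3 \<sigma> 0 [2] = cT S"
  shows "asat \<sigma> (Chain bs) \<longleftrightarrow> (\<forall>t\<in>S. foldl bstep (v1 \<sigma> 4) bs \<in> t 0)"
  using assms
proof (induction bs arbitrary: \<sigma>)
  case Nil then show ?case by (simp add: Leaf_sem)
next
  case (Cons b bs)
  show ?case using Cons.prems
    by (simp add: Cons.IH bitt_def bstep_def mult_2 Eb_def E45_def)
qed

lemma bval_foldl: "bval bs = foldl bstep 0 bs"
  by (simp add: bval_def bstep_def[abs_def])

lemma tr0_sem:
  "v3 \<sigma> 0 [2] = cT T \<Longrightarrow> asat \<sigma> (tr0 \<phi>) \<longleftrightarrow> tsat T \<phi>"
proof (induction \<phi> arbitrary: \<sigma> T)
  case (Prop p)
  then show ?case by (simp add: Chain_sem bval_foldl[symmetric] Ez_def)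
next
  case (Neg \<phi>)
  then show ?case
    by (simp add: all_dom2 ex_dom3 Single_sem) blast
next
  case (Conj \<phi> \<psi>)
  then show ?case
    by (simp add: ex_dom3 Eq3_sem GR_def)
next
  case (Disj \<phi> \<psi>)
  then show ?case
    by (simp add: ex_dom3 Eq3_sem Union3_sem GR_def sel1_def)
next
  case (Next \<phi>)
  then show ?case
    by (simp add: ex_dom3 Eq3_sem Suff_sem sel1_def)
next
  case (Fut \<phi>)
  then show ?case
    by (simp add: ex_dom3 Eq3_sem Suff_sem sel1_def)
next
  case (Glob \<phi>)
  then show ?case
    by (simp add: ex_dom3 Eq3_sem Suff_sem sel1_def)
next
  case (Until \<phi> \<psi>)
  then show ?case
    by (simp add: ex_dom3 Eq3_sem Suff_sem sel1_def GR_def not_le Le01_def) (meson not_le)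
next
  case (Rel \<phi> \<psi>)
  then show ?case
    by (simp add: ex_dom3 Eq3_sem Suff_sem sel1_def GR_def not_le Le01_def) blast
next
  case (BNeg \<phi>)
  then show ?case by simp
qed




lemma fv_basic[simp]:
  "fv1 (mem3 a X) = {}" "fv2 (mem3 a X) = {(X,2)}" "fv3 (mem3 a X) = {(a,[2])}"
  "fv1 (imp x y) = fv1 x \<union> fv1 y" "fv2 (imp x y) = fv2 x \<union> fv2 y" "fv3 (imp x y) = fv3 x \<union> fv3 y"
  "fv1 (iff x y) = fv1 x \<union> fv1 y" "fv2 (iff x y) = fv2 x \<union> fv2 y" "fv3 (iff x y) = fv3 x \<union> fv3 y"
  by (auto simp: mem3_def imp_def iff_def)

lemma fv_blocks[simp]:
  "fv1 (Eq3 a b) = {}" "fv2 (Eq3 a b) = {}" "fv3 (Eq3 a b) = {(a,[2]),(b,[2])}"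
  "fv1 (Union3 a b c) = {}" "fv2 (Union3 a b c) = {}" "fv3 (Union3 a b c) = {(a,[2]),(b,[2]),(c,[2])}"
  "fv1 (Suff a b t) = tfv t - {2,3}" "fv2 (Suff a b t) = {}" "fv3 (Suff a b t) = {(a,[2]),(b,[2])}"
  "fv1 (Single a X) = {}" "fv2 (Single a X) = {(X,2)} - {(1,2)}" "fv3 (Single a X) = {(a,[2])}"
  "fv1 Leaf = {4}" "fv2 Leaf = {}" "fv3 Leaf = {(0,[2])}"
  by (auto simp: Eq3_def Union3_def Suff_def shift_def Single_def Leaf_def)

lemma fv_Chain: "fv1 (Chain bs) \<subseteq> {4}" "fv2 (Chain bs) = {}" "fv3 (Chain bs) \<subseteq> {(0,[2])}"
  by (induction bs) (auto simp: bitt_def Eb_def E45_def)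

lemma fv_tr0: "fv1 (tr0 \<phi>) = {}" "fv2 (tr0 \<phi>) = {}" "fv3 (tr0 \<phi>) \<subseteq> {(0,[2])}"
  using fv_Chain by (induction \<phi>) (auto simp: GR_def sel1_def Ez_def Le01_def)

definition KT :: aform where
  "KT = AEx2 0 1 (AEx2 2 2 (AEx2 3 2 (AEx1 8 (AAnd
     (AAnd (AMem2 0 1 [TVar 8])
     (AAnd (AEx1 6 (AAll1 9 (imp (AMem2 0 1 [TVar 9]) (ALe (TVar 9) (TVar 6)))))
     (AAnd (AAll1 9 (AAll1 10 (imp (AMem2 2 2 [TVar 9, TVar 10]) (AAnd (AMem2 0 1 [TVar 9]) (AMem2 0 1 [TVar 10])))))
     (AAnd (AAll1 9 (imp (AMem2 0 1 [TVar 9]) (AEx1 10 (AMem2 2 2 [TVar 9, TVar 10]))))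
           (AEx1 7 (AAll1 9 (AAll1 3 (imp (AMem2 3 2 [TVar 9, TVar 3]) (ALe (TVar 3) (TVar 7))))))))))
     (AAll2 0 2 (iff (mem3 0 0) (AEx2 4 2 (AAnd
        (AAnd (AMem2 4 2 [TZero, TVar 8])
        (AAnd (AAll1 2 (AEx1 10 (AMem2 4 2 [TVar 2, TVar 10])))
        (AAnd (AAll1 2 (AAll1 10 (AAll1 11 (imp (AAnd (AMem2 4 2 [TVar 2, TVar 10]) (AMem2 4 2 [TVar 2, TVar 11]))
                                                (AEq (TVar 10) (TVar 11))))))
              (AAll1 2 (AAll1 10 (AAll1 11 (imp (AAnd (AMem2 4 2 [TVar 2, TVar 10]) (AMem2 4 2 [TPlus (TVar 2) TOne, TVar 11]))
                                                (AMem2 2 2 [TVar 10, TVar 11]))))))))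
        (AAll1 2 (AAll1 3 (iff (AMem2 0 2 [TVar 2, TVar 3]) (AEx1 10 (AAnd (AMem2 4 2 [TVar 2, TVar 10]) (AMem2 3 2 [TVar 10, TVar 3]))))))))))))))"

lemma fv_KT: "fv1 KT = {}" "fv2 KT = {}" "fv3 KT = {(0,[2])}"
  by (auto simp: KT_def)

definition c1 :: "nat set \<Rightarrow> nat list set" where "c1 X = {[x] | x. x \<in> X}"
definition c2 :: "(nat \<times> nat) set \<Rightarrow> nat list set" where "c2 Q = {[a, b] | a b. (a, b) \<in> Q}"

lemma c1_dom[simp]: "c1 X \<in> dom2 1" by (auto simp: c1_def dom2_def)
lemma c2_dom[simp]: "c2 X \<in> dom2 2" by (auto simp: c2_def dom2_def)
lemma mem_c1[simp]: "[x] \<in> c1 X \<longleftrightarrow> x \<in> X" by (auto simp: c1_def)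
lemma mem_c2[simp]: "[a, b] \<in> c2 X \<longleftrightarrow> (a, b) \<in> X" by (auto simp: c2_def)

lemma ex_dom1: "(\<exists>A\<in>dom2 1. P A) \<longleftrightarrow> (\<exists>X. P (c1 X))"
proof
  assume "\<exists>A\<in>dom2 1. P A"
  then obtain A where A: "A \<in> dom2 1" "P A" by blast
  have "A = c1 {x. [x] \<in> A}"
    using A(1) by (auto simp: dom2_def c1_def length_Suc_conv)
  with A show "\<exists>X. P (c1 X)" by metis
qed (use c1_dom in blast)

lemma ex_dom1': "(\<exists>A\<in>dom2 (Suc 0). P A) \<longleftrightarrow> (\<exists>X. P (c1 X))"
  using ex_dom1 by simp

lemma ex_dom2': "(\<exists>A\<in>dom2 2. P A) \<longleftrightarrow> (\<exists>X. P (c2 X))"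
proof
  assume "\<exists>A\<in>dom2 2. P A"
  then obtain A where A: "A \<in> dom2 2" "P A" by blast
  have "A = c2 {(x, y). [x, y] \<in> A}"
    using A(1) by (auto simp: dom2_def c2_def length_Suc_conv numeral_2_eq_2)
  with A show "\<exists>X. P (c2 X)" by metis
qed (use c2_dom in blast)

definition pathrel :: "(nat \<times> nat) set \<Rightarrow> (nat \<times> nat) set \<Rightarrow> nat \<Rightarrow> trace \<Rightarrow> bool" where
  "pathrel R E r t \<longleftrightarrow> (\<exists>P. (0, r) \<in> P \<and> (\<forall>i. \<exists>w. (i, w) \<in> P) \<and>
          (\<forall>i w w'. (i, w) \<in> P \<and> (i, w') \<in> P \<longrightarrow> w = w') \<and>
          (\<forall>i w w'. (i, w) \<in> P \<and> (i + 1, w') \<in> P \<longrightarrow> (w, w') \<in> R) \<and>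
          (\<forall>i p. p \<in> t i \<longleftrightarrow> (\<exists>w. (i, w) \<in> P \<and> (w, p) \<in> E)))"

definition KTrel :: "trace set \<Rightarrow> bool" where
  "KTrel T \<longleftrightarrow> (\<exists>(W::nat set) (R::(nat\<times>nat) set) (E::(nat\<times>nat) set) r. r \<in> W \<and> (\<exists>n. \<forall>u. u \<in> W \<longrightarrow> u \<le> n) \<and>
     (\<forall>u w. (u, w) \<in> R \<longrightarrow> u \<in> W \<and> w \<in> W) \<and> (\<forall>u. u \<in> W \<longrightarrow> (\<exists>w. (u, w) \<in> R)) \<and>
     (\<exists>m. \<forall>u p. (u, p) \<in> E \<longrightarrow> p \<le> m) \<and>
     (\<forall>t. t \<in> T \<longleftrightarrow> pathrel R E r t))"

lemma KT_sem: "v3 \<sigma> 0 [2] = cT T \<Longrightarrow> asat \<sigma> KT \<longleftrightarrow> KTrel T"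
  unfolding KTrel_def pathrel_def by (simp add: KT_def ex_dom1 ex_dom1' ex_dom2' all_dom2)




lemma path_in_W:
  assumes "R \<subseteq> W \<times> W" "r \<in> W" "\<pi> 0 = r" "\<forall>i. (\<pi> i, \<pi> (Suc i)) \<in> R"
  shows "\<pi> i \<in> W"
proof (cases i)
  case 0 then show ?thesis using assms by simp
next
  case (Suc j) then show ?thesis using assms(1,4) by blast
qed

lemma KTrel_kripke:
  "KTrel T \<longleftrightarrow> (\<exists>W R \<eta> r. finite_kripke W R \<eta> r \<and> T = kripke_team R \<eta> r)"
proof
  assume "KTrel T"
  then obtain W R E r where
    r: "r \<in> W" and bW: "\<exists>n. \<forall>u. u \<in> W \<longrightarrow> u \<le> n" and RW: "\<forall>u w. (u, w) \<in> R \<longrightarrow> u \<in> W \<and> w \<in> W"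
    and ser: "\<forall>u. u \<in> W \<longrightarrow> (\<exists>w. (u, w) \<in> R)" and bE: "\<exists>m. \<forall>u p. (u, p) \<in> E \<longrightarrow> p \<le> m"
    and TT: "\<forall>t. t \<in> T \<longleftrightarrow> pathrel R E r t"
    unfolding KTrel_def by blast
  define \<eta> where "\<eta> w = {p. (w, p) \<in> E}" for w
  have fin: "finite W" using bW by (auto simp: finite_nat_set_iff_bounded_le)
  obtain m where m: "\<forall>u p. (u, p) \<in> E \<longrightarrow> p \<le> m" using bE by blast
  have "finite (\<eta> w)" for w
    by (rule finite_subset[of _ "{..m}"]) (use m in \<open>auto simp: \<eta>_def\<close>)
  then have K: "finite_kripke W R \<eta> r"
    using fin r RW ser by (auto simp: finite_kripke_def)
  have "T = kripke_team R \<eta> r"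
  proof (intro set_eqI iffI)
    fix t assume "t \<in> T"
    then have "pathrel R E r t" using TT by simp
    then obtain P where P0: "(0, r) \<in> P" and Ptot: "\<forall>i. \<exists>w. (i, w) \<in> P"
      and Pfun: "\<forall>i w w'. (i, w) \<in> P \<and> (i, w') \<in> P \<longrightarrow> w = w'"
      and PR: "\<forall>i w w'. (i, w) \<in> P \<and> (i + 1, w') \<in> P \<longrightarrow> (w, w') \<in> R"
      and Pt: "\<forall>i p. p \<in> t i \<longleftrightarrow> (\<exists>w. (i, w) \<in> P \<and> (w, p) \<in> E)"
      unfolding pathrel_def by blast
    define \<pi> where "\<pi> i = (SOME w. (i, w) \<in> P)" for i
    have \<pi>P: "(i, \<pi> i) \<in> P" for i using Ptot unfolding \<pi>_def by (metis someI_ex)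
    have \<pi>u: "(i, w) \<in> P \<longleftrightarrow> w = \<pi> i" for i w using \<pi>P Pfun by blast
    have tt: "t = (\<lambda>i. \<eta> (\<pi> i))" unfolding fun_eq_iff \<eta>_def
    proof (intro allI set_eqI)
      fix i p show "p \<in> t i \<longleftrightarrow> p \<in> {p. (\<pi> i, p) \<in> E}" using Pt \<pi>u by auto
    qed
    have p0: "\<pi> 0 = r" using P0 by (simp add: \<pi>u)
    have pR: "\<forall>i. (\<pi> i, \<pi> (Suc i)) \<in> R" using PR \<pi>P by (metis Suc_eq_plus1)
    show "t \<in> kripke_team R \<eta> r" unfolding kripke_team_def
      using tt p0 pR by (intro CollectI exI[of _ \<pi>]) simp
  next
    fix t assume "t \<in> kripke_team R \<eta> r"
    then obtain \<pi> where t: "t = (\<lambda>i. \<eta> (\<pi> i))" and p0: "\<pi> 0 = r" and pR: "\<forall>i. (\<pi> i, \<pi> (Suc i)) \<in> R"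
      unfolding kripke_team_def by blast
    let ?P = "{(i, \<pi> i) | i. True}"
    have "(0, r) \<in> ?P" using p0 by auto
    moreover have "\<forall>i w w'. (i, w) \<in> ?P \<and> (i + 1, w') \<in> ?P \<longrightarrow> (w, w') \<in> R" using pR by auto
    moreover have "\<forall>i p. p \<in> t i \<longleftrightarrow> (\<exists>w. (i, w) \<in> ?P \<and> (w, p) \<in> E)" using t by (auto simp: \<eta>_def)
    ultimately have "pathrel R E r t" unfolding pathrel_def
      by (intro exI[of _ ?P]) auto
    then show "t \<in> T" using TT by simp
  qed
  with K show "\<exists>W R \<eta> r. finite_kripke W R \<eta> r \<and> T = kripke_team R \<eta> r" by blast
next
  assume "\<exists>W R \<eta> r. finite_kripke W R \<eta> r \<and> T = kripke_team R \<eta> r"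
  then obtain W R \<eta> r where K: "finite_kripke W R \<eta> r" and T: "T = kripke_team R \<eta> r" by blast
  have fin: "finite W" and RW: "R \<subseteq> W \<times> W" and ser: "\<forall>w\<in>W. \<exists>v. (w, v) \<in> R"
    and fl: "\<forall>w\<in>W. finite (\<eta> w)" and r: "r \<in> W"
    using K by (auto simp: finite_kripke_def)
  define E where "E = {(w, p). w \<in> W \<and> p \<in> \<eta> w}"
  have "finite (\<Union>w\<in>W. \<eta> w)" using fin fl by blast
  then obtain m where m: "\<forall>p\<in>(\<Union>w\<in>W. \<eta> w). p \<le> m" using finite_nat_set_iff_bounded_le by blast
  have bE: "\<forall>u p. (u, p) \<in> E \<longrightarrow> p \<le> m" using m by (auto simp: E_def)
  obtain n where n: "\<forall>u\<in>W. u \<le> n" using fin finite_nat_set_iff_bounded_le by blast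
  have TT: "t \<in> T \<longleftrightarrow> pathrel R E r t" for t
  proof
    assume "t \<in> T"
    then obtain \<pi> where t: "t = (\<lambda>i. \<eta> (\<pi> i))" and p0: "\<pi> 0 = r" and pR: "\<forall>i. (\<pi> i, \<pi> (Suc i)) \<in> R"
      unfolding T kripke_team_def by blast
    have inW: "\<pi> i \<in> W" for i using path_in_W[OF RW r p0 pR] .
    let ?P = "{(i, \<pi> i) | i. True}"
    show "pathrel R E r t" unfolding pathrel_def
      by (rule exI[of _ ?P]) (use p0 pR inW t in \<open>auto simp: E_def\<close>)
  next
    assume "pathrel R E r t"
    then obtain P where P0: "(0, r) \<in> P" and Ptot: "\<forall>i. \<exists>w. (i, w) \<in> P"
      and Pfun: "\<forall>i w w'. (i, w) \<in> P \<and> (i, w') \<in> P \<longrightarrow> w = w'"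
      and PR: "\<forall>i w w'. (i, w) \<in> P \<and> (i + 1, w') \<in> P \<longrightarrow> (w, w') \<in> R"
      and Pt: "\<forall>i p. p \<in> t i \<longleftrightarrow> (\<exists>w. (i, w) \<in> P \<and> (w, p) \<in> E)"
      unfolding pathrel_def by blast
    define \<pi> where "\<pi> i = (SOME w. (i, w) \<in> P)" for i
    have \<pi>P: "(i, \<pi> i) \<in> P" for i using Ptot unfolding \<pi>_def by (metis someI_ex)
    have \<pi>u: "(i, w) \<in> P \<longleftrightarrow> w = \<pi> i" for i w using \<pi>P Pfun by blast
    have p0: "\<pi> 0 = r" using P0 by (simp add: \<pi>u)
    have pR: "\<forall>i. (\<pi> i, \<pi> (Suc i)) \<in> R" using PR \<pi>P by (metis Suc_eq_plus1)
    have inW: "\<pi> i \<in> W" for i using path_in_W[OF RW r p0 pR] .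
    have "t = (\<lambda>i. \<eta> (\<pi> i))" using Pt \<pi>u inW by (auto simp: E_def fun_eq_iff)
    then show "t \<in> T" unfolding T kripke_team_def using p0 pR by blast
  qed
  show "KTrel T" unfolding KTrel_def
    apply (rule exI[of _ W], rule exI[of _ R], rule exI[of _ E], rule exI[of _ r])
    using r n RW ser bE TT by blast
qed




definition topS :: "ltl \<Rightarrow> aform" where "topS \<phi> = AEx3 0 [2] (tr0 \<phi>)"
definition topF :: "ltl \<Rightarrow> aform" where "topF \<phi> = AEx3 0 [2] (AAnd KT (tr0 \<phi>))"

lemma closed_topS: "closed (topS \<phi>)"
  using fv_tr0[of \<phi>] by (auto simp: closed_def topS_def)
lemma closed_topF: "closed (topF \<phi>)"
  using fv_tr0[of \<phi>] fv_KT by (auto simp: closed_def topF_def)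

lemma topS_Delta: "topS \<phi> \<in> Delta30 \<longleftrightarrow> \<phi> \<in> LTL_SAT"
  using closed_topS[of \<phi>] by (simp add: Delta30_def topS_def ex_dom3 tr0_sem LTL_SAT_def)

lemma topF_Delta: "topF \<phi> \<in> Delta30 \<longleftrightarrow> \<phi> \<in> LTL_FINSAT"
proof -
  have "topF \<phi> \<in> Delta30 \<longleftrightarrow> (\<exists>T. KTrel T \<and> tsat T \<phi>)"
    using closed_topF[of \<phi>] by (simp add: Delta30_def topF_def ex_dom3 tr0_sem KT_sem)
  also have "\<dots> \<longleftrightarrow> \<phi> \<in> LTL_FINSAT"
    unfolding KTrel_kripke LTL_FINSAT_def by blast
  finally show ?thesis .
qed




declare tok_simps[simp del] tok_Suc0[simp del]

definition GRc :: "bool list" where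
  "GRc = tok 13 @ num 0 @ enc_list num [2] @ tok 7 @ enc_aform (Eq3 0 2)"
definition S1c :: "bool list" where
  "S1c = tok 13 @ num 0 @ enc_list num [2] @ tok 7 @ enc_aform (Eq3 0 1)"
definition ch2 where "ch2 = tok 9 @ num 4 @ tok 7 @ enc_aform Ez"
definition ch3 where "ch3 = tok 12 @ num 0 @ num 2 @ tok 8 @ tok 6 @ enc_aform (mem3 0 0) @ tok 13 @ num 0 @
   enc_list num [2] @ tok 7 @ enc_aform (Single 0 0) @ tok 6"
definition ch4 where "ch4 = tok 13 @ num 2 @ enc_list num [2] @ tok 7 @ enc_aform (Eq3 2 0) @ tok 7"
definition ch5 where "ch5 = tok 13 @ num 1 @ enc_list num [2] @ tok 13 @ num 2 @ enc_list num [2] @ tok 7 @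
   enc_aform (Union3 0 1 2) @ tok 7 @ S1c"
definition ch6 where "ch6 = tok 13 @ num 1 @ enc_list num [2] @ tok 7 @ enc_aform (Suff 1 0 TOne) @ S1c"
definition ch7 where "ch7 = tok 9 @ num 0 @ tok 13 @ num 1 @ enc_list num [2] @ tok 7 @ enc_aform (Suff 1 0 (TVar 0)) @ S1c"
definition ch8 where "ch8 = tok 10 @ num 0 @ tok 13 @ num 1 @ enc_list num [2] @ tok 7 @ enc_aform (Suff 1 0 (TVar 0)) @ S1c"
definition ch9 where "ch9 = tok 9 @ num 0 @ tok 13 @ num 2 @ enc_list num [2] @ tok 7 @ enc_aform (Suff 2 0 (TVar 0)) @
   tok 7 @ tok 10 @ num 1 @ tok 8 @ enc_aform Le01 @ tok 13 @ num 1 @ enc_list num [2] @ tok 7 @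
   enc_aform (Suff 1 0 (TVar 1)) @ S1c"
definition ch10 where "ch10 = tok 10 @ num 0 @ tok 13 @ num 2 @ enc_list num [2] @ tok 7 @ enc_aform (Suff 2 0 (TVar 0)) @
   tok 8 @ tok 9 @ num 1 @ tok 7 @ tok 6 @ enc_aform Le01 @ tok 13 @ num 1 @ enc_list num [2] @ tok 7 @
   enc_aform (Suff 1 0 (TVar 1)) @ S1c"
definition ch11 where "ch11 = tok 6"
definition digc :: "bool \<Rightarrow> bool list" where
  "digc b = tok 9 @ num 5 @ tok 7 @ enc_aform (Eb b) @ tok 9 @ num 4 @ tok 7 @ enc_aform E45"

definition trf :: "bool \<Rightarrow> ltl \<Rightarrow> aform" where "trf fl \<phi> = (if fl then GR (tr0 \<phi>) else tr0 \<phi>)"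
definition gl :: "bool \<Rightarrow> bool list" where "gl fl = (if fl then GRc else [])"

lemma enc_GR: "enc_aform (GR a) = GRc @ enc_aform a" by (simp add: GR_def GRc_def)
lemma enc_sel1: "enc_aform (sel1 a) = S1c @ enc_aform a" by (simp add: sel1_def S1c_def)
lemma enc_trf: "enc_aform (trf fl \<phi>) = gl fl @ enc_aform (tr0 \<phi>)" by (simp add: trf_def gl_def enc_GR)

lemma enc_Chain: "enc_aform (Chain []) = enc_aform Leaf"
  "enc_aform (Chain (b # bs)) = digc b @ enc_aform (Chain bs)"
  by (simp_all add: digc_def)

lemma enc_tr0:
  "enc_aform (tr0 (Prop p)) = ch2 @ enc_aform (Chain (bin p))"
  "enc_aform (tr0 (Neg \<phi>)) = ch3 @ enc_aform (tr0 \<phi>)"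
  "enc_aform (tr0 (Conj \<phi> \<psi>)) = ch4 @ enc_aform (tr0 \<phi>) @ GRc @ enc_aform (tr0 \<psi>)"
  "enc_aform (tr0 (Disj \<phi> \<psi>)) = ch5 @ enc_aform (tr0 \<phi>) @ GRc @ enc_aform (tr0 \<psi>)"
  "enc_aform (tr0 (Next \<phi>)) = ch6 @ enc_aform (tr0 \<phi>)"
  "enc_aform (tr0 (Fut \<phi>)) = ch7 @ enc_aform (tr0 \<phi>)"
  "enc_aform (tr0 (Glob \<phi>)) = ch8 @ enc_aform (tr0 \<phi>)"
  "enc_aform (tr0 (Until \<phi> \<psi>)) = ch9 @ enc_aform (tr0 \<phi>) @ GRc @ enc_aform (tr0 \<psi>)"
  "enc_aform (tr0 (Rel \<phi> \<psi>)) = ch10 @ enc_aform (tr0 \<phi>) @ GRc @ enc_aform (tr0 \<psi>)"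
  "enc_aform (tr0 (BNeg \<phi>)) = ch11 @ enc_aform (tr0 \<phi>)"
  by (simp_all add: ch2_def ch3_def ch4_def ch5_def ch6_def ch7_def ch8_def ch9_def ch10_def ch11_def
      enc_GR enc_sel1 imp_def)

section \<open>Decoding\<close>

lemma dec6: "(enc_aform \<psi> @ r = tok 6 @ s) \<longleftrightarrow> (\<exists>a. \<psi> = ANot a \<and> enc_aform a @ r = s)"
  by (cases \<psi>) (auto simp: tok_simps)
lemma dec7: "(enc_aform \<psi> @ r = tok 7 @ s) \<longleftrightarrow> (\<exists>a b. \<psi> = AAnd a b \<and> enc_aform a @ enc_aform b @ r = s)"
  by (cases \<psi>) (auto simp: tok_simps)
lemma dec8: "(enc_aform \<psi> @ r = tok 8 @ s) \<longleftrightarrow> (\<exists>a b. \<psi> = AOr a b \<and> enc_aform a @ enc_aform b @ r = s)"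
  by (cases \<psi>) (auto simp: tok_simps)
lemma dec9: "(enc_aform \<psi> @ r = tok 9 @ s) \<longleftrightarrow> (\<exists>x a. \<psi> = AEx1 x a \<and> num x @ enc_aform a @ r = s)"
  by (cases \<psi>) (auto simp: tok_simps)
lemma dec10: "(enc_aform \<psi> @ r = tok 10 @ s) \<longleftrightarrow> (\<exists>x a. \<psi> = AAll1 x a \<and> num x @ enc_aform a @ r = s)"
  by (cases \<psi>) (auto simp: tok_simps)
lemma dec12: "(enc_aform \<psi> @ r = tok 12 @ s) \<longleftrightarrow> (\<exists>X n a. \<psi> = AAll2 X n a \<and> num X @ num n @ enc_aform a @ r = s)"
  by (cases \<psi>) (auto simp: tok_simps)
lemma dec13: "(enc_aform \<psi> @ r = tok 13 @ s) \<longleftrightarrow> (\<exists>x ns a. \<psi> = AEx3 x ns a \<and> num x @ enc_list num ns @ enc_aform a @ r = s)"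
  by (cases \<psi>) (auto simp: tok_simps)
lemma dec15: "enc_aform \<psi> @ r \<noteq> tok 15 @ s"
  by (cases \<psi>) (auto simp: tok_simps)
lemma dec15': "enc_aform \<psi> @ r \<noteq> tok 15"
  using dec15[of \<psi> r "[]"] by simp

lemmas decs = dec6 dec7 dec8 dec9 dec10 dec12 dec13

lemma dec_GRc: "enc_aform \<psi> @ r = GRc @ s \<Longrightarrow> \<exists>a. \<psi> = GR a \<and> enc_aform a @ r = s"
  by (auto simp: GRc_def decs GR_def)
lemma dec_S1c: "enc_aform \<psi> @ r = S1c @ s \<Longrightarrow> \<exists>a. \<psi> = sel1 a \<and> enc_aform a @ r = s"
  by (auto simp: S1c_def decs sel1_def)

lemma dec_ch2: "enc_aform \<psi> @ r = ch2 @ s \<Longrightarrow> \<exists>a. \<psi> = AEx1 4 (AAnd Ez a) \<and> enc_aform a @ r = s"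
  by (auto simp: ch2_def decs)
lemma dec_ch3: "enc_aform \<psi> @ r = ch3 @ s \<Longrightarrow>
   \<exists>a. \<psi> = AAll2 0 2 (imp (mem3 0 0) (AEx3 0 [2] (AAnd (Single 0 0) (ANot a)))) \<and> enc_aform a @ r = s"
  by (auto simp: ch3_def decs imp_def)
lemma dec_ch4: "enc_aform \<psi> @ r = ch4 @ s \<Longrightarrow>
   \<exists>a b. \<psi> = AEx3 2 [2] (AAnd (Eq3 2 0) (AAnd a b)) \<and> enc_aform a @ enc_aform b @ r = s"
  by (auto simp: ch4_def decs)

lemma dec_ch5: "enc_aform \<psi> @ r = ch5 @ s \<Longrightarrow>
   \<exists>a b. \<psi> = AEx3 1 [2] (AEx3 2 [2] (AAnd (Union3 0 1 2) (AAnd (sel1 a) b))) \<and> enc_aform a @ enc_aform b @ r = s"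
  by (auto simp: ch5_def S1c_def decs sel1_def)
lemma dec_ch6: "enc_aform \<psi> @ r = ch6 @ s \<Longrightarrow>
   \<exists>a. \<psi> = AEx3 1 [2] (AAnd (Suff 1 0 TOne) (sel1 a)) \<and> enc_aform a @ r = s"
  by (auto simp: ch6_def S1c_def decs sel1_def)
lemma dec_ch7: "enc_aform \<psi> @ r = ch7 @ s \<Longrightarrow>
   \<exists>a. \<psi> = AEx1 0 (AEx3 1 [2] (AAnd (Suff 1 0 (TVar 0)) (sel1 a))) \<and> enc_aform a @ r = s"
  by (auto simp: ch7_def S1c_def decs sel1_def)
lemma dec_ch8: "enc_aform \<psi> @ r = ch8 @ s \<Longrightarrow>
   \<exists>a. \<psi> = AAll1 0 (AEx3 1 [2] (AAnd (Suff 1 0 (TVar 0)) (sel1 a))) \<and> enc_aform a @ r = s"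
  by (auto simp: ch8_def S1c_def decs sel1_def)
lemma dec_ch9: "enc_aform \<psi> @ r = ch9 @ s \<Longrightarrow>
   \<exists>a b. \<psi> = AEx1 0 (AEx3 2 [2] (AAnd (Suff 2 0 (TVar 0))
      (AAnd (AAll1 1 (AOr Le01 (AEx3 1 [2] (AAnd (Suff 1 0 (TVar 1)) (sel1 a))))) b)))
    \<and> enc_aform a @ enc_aform b @ r = s"
  by (auto simp: ch9_def S1c_def decs sel1_def)
lemma dec_ch10: "enc_aform \<psi> @ r = ch10 @ s \<Longrightarrow>
   \<exists>a b. \<psi> = AAll1 0 (AEx3 2 [2] (AAnd (Suff 2 0 (TVar 0))
      (AOr (AEx1 1 (AAnd (ANot Le01) (AEx3 1 [2] (AAnd (Suff 1 0 (TVar 1)) (sel1 a))))) b)))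
    \<and> enc_aform a @ enc_aform b @ r = s"
  by (auto simp: ch10_def S1c_def decs sel1_def)
lemma dec_ch11: "enc_aform \<psi> @ r = ch11 @ s \<Longrightarrow> \<exists>a. \<psi> = ANot a \<and> enc_aform a @ r = s"
  by (auto simp: ch11_def decs)
lemma dec_digc: "enc_aform \<psi> @ r = digc b @ s \<Longrightarrow>
   \<exists>a. \<psi> = AEx1 5 (AAnd (Eb b) (AEx1 4 (AAnd E45 a))) \<and> enc_aform a @ r = s"
  by (auto simp: digc_def decs)




datatype cx = Nd bool | D0 | DZ | DM

definition ch :: "nat \<Rightarrow> bool list" where
  "ch k = (if k = 2 then ch2 else if k = 3 then ch3 else if k = 4 then ch4 else if k = 5 then ch5
     else if k = 6 then ch6 else if k = 7 then ch7 else if k = 8 then ch8 else if k = 9 then ch9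
     else if k = 10 then ch10 else ch11)"

fun act :: "cx \<Rightarrow> nat \<Rightarrow> (bool list \<times> cx) option" where
  "act (Nd fl) k = (if 2 \<le> k \<and> k \<le> 11 then Some (gl fl @ ch k, if k = 2 then D0 else Nd False) else None)"
| "act D0 k = (if k = 0 then Some (digc False, DZ) else if k = 1 then Some (digc True, DM) else None)"
| "act DZ k = (if k = 15 then Some (enc_aform Leaf, Nd True) else None)"
| "act DM k = (if k = 0 then Some (digc False, DM) else if k = 1 then Some (digc True, DM)
     else if k = 15 then Some (enc_aform Leaf, Nd True) else None)"

function Ot :: "cx \<Rightarrow> bool list \<Rightarrow> bool list" where
  "Ot c x = (if x = [] then [] else if length x < 4 then tok 15 else
     (case act c (bval (take 4 x)) of None \<Rightarrow> tok 15 | Some (h, c') \<Rightarrow> h @ Ot c' (drop 4 x)))"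
  by auto
termination by (relation "measure (\<lambda>(c, x). length x)") auto

declare Ot.simps[simp del]

lemma length_tok[simp]: "length (tok k) = 4" by (simp add: tok_def)

lemma c16: "(k::nat) < 16 \<Longrightarrow> k = 0 \<or> k = 1 \<or> k = 2 \<or> k = 3 \<or> k = 4 \<or> k = 5 \<or> k = 6 \<or> k = 7 \<or> k = 8 \<or> k = 9 \<or> k = 10 \<or> k = 11 \<or> k = 12 \<or> k = 13 \<or> k = 14 \<or> k = 15"
  by presburger
lemma bval_tok: "k < 16 \<Longrightarrow> bval (tok k) = k"
proof -
  assume "k < 16"
  from c16[OF this] show ?thesis by (elim disjE) (simp_all add: tok_def bval_def)
qed
lemma tok_bval: "length bs = 4 \<Longrightarrow> tok (bval bs) = bs \<and> bval bs < 16"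
proof -
  assume "length bs = 4"
  then obtain a b c d where "bs = [a, b, c, d]"
    by (auto simp: numeral_eq_Suc length_Suc_conv)
  then show ?thesis by (cases a; cases b; cases c; cases d) (simp_all add: tok_def bval_def)
qed

lemma tok_ne[simp]: "tok k \<noteq> []" by (simp add: tok_def)
lemma drop_tok[simp]: "drop 4 (tok k @ r) = r" by (simp add: tok_def)
lemma take_tok[simp]: "take 4 (tok k @ r) = tok k" by (simp add: tok_def)

lemma Ot_nil[simp]: "Ot c [] = []" by (simp add: Ot.simps)

lemma Ot_tok: "k < 16 \<Longrightarrow> Ot c (tok k @ rest) =
   (case act c k of None \<Rightarrow> tok 15 | Some (h, c') \<Rightarrow> h @ Ot c' rest)"
proof -
  assume k: "k < 16"
  show ?thesis using k by (subst Ot.simps) (simp add: bval_tok split: option.split)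
qed

lemma Ot_short: "x \<noteq> [] \<Longrightarrow> length x < 4 \<Longrightarrow> Ot c x = tok 15"
  by (subst Ot.simps) simp

lemma split_tok: "4 \<le> length x \<Longrightarrow> \<exists>k rest. k < 16 \<and> x = tok k @ rest \<and> length rest < length x"
proof -
  assume "4 \<le> length x"
  then have "length (take 4 x) = 4" by simp
  from tok_bval[OF this] show ?thesis
    by (metis \<open>4 \<le> length x\<close> append_take_drop_id length_append length_tok less_add_same_cancel2 zero_less_numeral)
qed

lemma tok_nat_simps: "tok 0 = tok 0" by simp

lemma Ot_digits: "Ot DM (concat (map dig bs) @ tok 15 @ rest) = enc_aform (Chain bs) @ Ot (Nd True) rest"
proof (induction bs)
  case Nil then show ?case by (simp add: Ot_tok enc_Chain)
next
  case (Cons b bs)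
  have d: "dig b = tok (if b then 1 else 0)" by (simp add: dig_def)
  show ?case using Cons by (cases b) (simp_all add: d Ot_tok enc_Chain digc_def)
qed

lemma bin_shape: "bin p = [False] \<or> (\<exists>bs. bin p = True # bs)"
proof (induction p rule: bin.induct)
  case (1 n)
  show ?case
  proof (cases "n < 2")
    case True then show ?thesis by (subst (1 2) bin.simps) auto
  next
    case False
    then have "bin n = bin (n div 2) @ [odd n]" by (subst bin.simps) simp
    moreover have "bin (n div 2) \<noteq> [False]"
    proof
      assume "bin (n div 2) = [False]"
      then have "bval (bin (n div 2)) = 0" by (simp add: bval_def)
      with False show False by simp
    qed
    ultimately show ?thesis using 1 False by (cases "bin (n div 2)") auto
  qed
qed

lemma Ot_num: "Ot D0 (num p @ rest) = enc_aform (Chain (bin p)) @ Ot (Nd True) rest"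
proof -
  have d: "dig b = tok (if b then 1 else 0)" for b by (simp add: dig_def)
  from bin_shape[of p] show ?thesis
  proof
    assume h: "bin p = [False]"
    show ?thesis unfolding num_dig h by (simp add: d Ot_tok enc_Chain digc_def)
  next
    assume "\<exists>bs. bin p = True # bs"
    then obtain bs where h: "bin p = True # bs" by blast
    show ?thesis unfolding num_dig h using Ot_digits[of bs rest] by (simp add: d Ot_tok enc_Chain digc_def)
  qed
qed

lemma lemA: "Ot (Nd fl) (enc_ltl \<phi> @ rest) = enc_aform (trf fl \<phi>) @ Ot (Nd True) rest"
proof (induction \<phi> arbitrary: fl rest)
  case (Prop p) then show ?case by (simp add: Ot_tok ch_def enc_trf enc_tr0 Ot_num gl_def del: tr0.simps)
qed (simp_all add: Ot_tok ch_def enc_trf enc_tr0 gl_def del: tr0.simps)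




lemma enc_nonempty[simp]: "enc_aform \<psi> \<noteq> []" by (cases \<psi>) (auto simp: tok_def)
lemma enc_ne[simp]: "enc_aform \<psi> @ r \<noteq> []" by (cases \<psi>) (auto simp: tok_def)
lemma enc_ne'[simp]: "[] \<noteq> enc_aform \<psi> @ r" using enc_ne by metis

lemma dec_gl: "enc_aform \<psi> @ r = gl fl @ s \<Longrightarrow> \<exists>a. \<psi> = (if fl then GR a else a) \<and> enc_aform a @ r = s"
  using dec_GRc by (cases fl) (auto simp: gl_def)

lemma trf_simp: "trf fl \<phi> = (if fl then GR (tr0 \<phi>) else tr0 \<phi>)" by (simp add: trf_def)

lemma bin_surj: "bin (bval (True # bs)) = True # bs"
proof (induction bs rule: rev_induct)
  case Nil then show ?case by (subst bin.simps) (simp add: bval_def)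
next
  case (snoc b bs)
  have ge: "bval (True # bs) \<ge> 1"
  proof -
    have "bval (True # bs) \<ge> 1 * 2 ^ length bs" unfolding bval_def
    proof (induction bs rule: rev_induct)
      case (snoc c cs) then show ?case by (simp add: bval_def[symmetric])
    qed simp
    then show ?thesis by (metis le_trans mult_1 one_le_power one_le_numeral)
  qed
  let ?v = "bval (True # bs)"
  have "bval (True # bs @ [b]) = 2 * ?v + (if b then 1 else 0)"
    using bval_snoc[of "True # bs" b] by simp
  moreover have "bin (2 * ?v + (if b then 1 else 0)) = bin ?v @ [b]"
    using ge by (subst bin.simps) auto
  ultimately show ?case using snoc by simp
qed

lemma num_as: "num p = concat (map dig (bin p)) @ tok 15" by (rule num_dig)

lemma c16': "(k::nat) < 16 \<Longrightarrow> \<not> (2 \<le> k \<and> k \<le> 11) \<Longrightarrow> k = 0 \<or> k = 1 \<or> k = 12 \<or> k = 13 \<or> k = 14 \<or> k = 15"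
  by presburger
lemma c211: "2 \<le> (k::nat) \<Longrightarrow> k \<le> 11 \<Longrightarrow> k = 2 \<or> k = 3 \<or> k = 4 \<or> k = 5 \<or> k = 6 \<or> k = 7 \<or> k = 8 \<or> k = 9 \<or> k = 10 \<or> k = 11"
  by presburger

lemma lemB_DM: "Ot DM x = enc_aform \<chi> @ r \<Longrightarrow>
   \<exists>bs x'. x = concat (map dig bs) @ tok 15 @ x' \<and> \<chi> = Chain bs \<and> r = Ot (Nd True) x'"
proof (induction "length x" arbitrary: x \<chi> r rule: less_induct)
  case less
  consider "x = []" | "x \<noteq> [] \<and> length x < 4" | "4 \<le> length x" by linarith
  then show ?case
  proof cases
    case 1 then show ?thesis using less.prems by simp
  next
    case 2 then show ?thesis using less.prems Ot_short dec15' by metis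
  next
    case 3
    then obtain k rest where k: "k < 16" and x: "x = tok k @ rest" and lr: "length rest < length x"
      using split_tok by blast
    have O: "Ot DM x = (case act DM k of None \<Rightarrow> tok 15 | Some (h, c') \<Rightarrow> h @ Ot c' rest)"
      using Ot_tok[OF k] x by simp
    consider "k = 0" | "k = 1" | "k = 15" | "k \<noteq> 0 \<and> k \<noteq> 1 \<and> k \<noteq> 15" by blast
    then show ?thesis
    proof cases
      case 4 then show ?thesis using O less.prems dec15' by simp
    next
      case 3
      then have "enc_aform Leaf @ Ot (Nd True) rest = enc_aform \<chi> @ r" using O less.prems by simp
      then have "\<chi> = Leaf" "r = Ot (Nd True) rest" by simp_all
      then show ?thesis using x 3
        by (intro exI[of _ "[]"] exI[of _ rest]) simp
    next
      case 1
      then have "enc_aform \<chi> @ r = digc False @ Ot DM rest" using O less.prems by simp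
      from dec_digc[OF this] obtain a where \<chi>: "\<chi> = AEx1 5 (AAnd (Eb False) (AEx1 4 (AAnd E45 a)))"
        and a: "Ot DM rest = enc_aform a @ r" by metis
      from less.hyps[OF lr a] obtain bs x' where "rest = concat (map dig bs) @ tok 15 @ x'" "a = Chain bs"
        "r = Ot (Nd True) x'" by blast
      then show ?thesis using x 1 \<chi>
        by (intro exI[of _ "False # bs"] exI[of _ x']) simp
    next
      case 2
      then have "enc_aform \<chi> @ r = digc True @ Ot DM rest" using O less.prems by simp
      from dec_digc[OF this] obtain a where \<chi>: "\<chi> = AEx1 5 (AAnd (Eb True) (AEx1 4 (AAnd E45 a)))"
        and a: "Ot DM rest = enc_aform a @ r" by metis
      from less.hyps[OF lr a] obtain bs x' where "rest = concat (map dig bs) @ tok 15 @ x'" "a = Chain bs"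
        "r = Ot (Nd True) x'" by blast
      then show ?thesis using x 2 \<chi>
        by (intro exI[of _ "True # bs"] exI[of _ x']) (simp add: tok_Suc0 dig_def tok_def)
    qed
  qed
qed

lemma lemB_DZ: "Ot DZ x = enc_aform \<chi> @ r \<Longrightarrow> \<exists>x'. x = tok 15 @ x' \<and> \<chi> = Leaf \<and> r = Ot (Nd True) x'"
proof -
  assume h: "Ot DZ x = enc_aform \<chi> @ r"
  consider "x = []" | "x \<noteq> [] \<and> length x < 4" | "4 \<le> length x" by linarith
  then show ?thesis
  proof cases
    case 1 then show ?thesis using h by simp
  next
    case 2 then show ?thesis using h Ot_short dec15' by metis
  next
    case 3
    then obtain k rest where k: "k < 16" and x: "x = tok k @ rest"
      using split_tok by blast
    have O: "Ot DZ x = (case act DZ k of None \<Rightarrow> tok 15 | Some (h, c') \<Rightarrow> h @ Ot c' rest)"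
      using Ot_tok[OF k] x by simp
    show ?thesis
    proof (cases "k = 15")
      case False then show ?thesis using O h dec15' by simp
    next
      case True
      then have "enc_aform Leaf @ Ot (Nd True) rest = enc_aform \<chi> @ r" using O h by simp
      then show ?thesis using x True by auto
    qed
  qed
qed

lemma lemB_D0: "Ot D0 x = enc_aform \<chi> @ r \<Longrightarrow>
   \<exists>p x'. x = num p @ x' \<and> \<chi> = Chain (bin p) \<and> r = Ot (Nd True) x'"
proof -
  assume h: "Ot D0 x = enc_aform \<chi> @ r"
  consider "x = []" | "x \<noteq> [] \<and> length x < 4" | "4 \<le> length x" by linarith
  then show ?thesis
  proof cases
    case 1 then show ?thesis using h by simp
  next
    case 2 then show ?thesis using h Ot_short dec15' by metis
  next
    case 3
    then obtain k rest where k: "k < 16" and x: "x = tok k @ rest"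
      using split_tok by blast
    have O: "Ot D0 x = (case act D0 k of None \<Rightarrow> tok 15 | Some (h, c') \<Rightarrow> h @ Ot c' rest)"
      using Ot_tok[OF k] x by simp
    consider "k = 0" | "k = 1" | "k \<noteq> 0 \<and> k \<noteq> 1" by blast
    then show ?thesis
    proof cases
      case 3 then show ?thesis using O h dec15' by simp
    next
      case 1
      then have "enc_aform \<chi> @ r = digc False @ Ot DZ rest" using O h by simp
      from dec_digc[OF this] obtain a where \<chi>: "\<chi> = AEx1 5 (AAnd (Eb False) (AEx1 4 (AAnd E45 a)))"
        and a: "Ot DZ rest = enc_aform a @ r" by metis
      from lemB_DZ[OF a] obtain x' where "rest = tok 15 @ x'" "a = Leaf" "r = Ot (Nd True) x'" by blast
      moreover have "bin 0 = [False]" by (subst bin.simps) simp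
      ultimately show ?thesis using x 1 \<chi>
        by (intro exI[of _ 0] exI[of _ x']) (simp add: num_dig dig_def)
    next
      case 2
      then have "enc_aform \<chi> @ r = digc True @ Ot DM rest" using O h by simp
      from dec_digc[OF this] obtain a where \<chi>: "\<chi> = AEx1 5 (AAnd (Eb True) (AEx1 4 (AAnd E45 a)))"
        and a: "Ot DM rest = enc_aform a @ r" by metis
      from lemB_DM[OF a] obtain bs x' where "rest = concat (map dig bs) @ tok 15 @ x'" "a = Chain bs"
        "r = Ot (Nd True) x'" by blast
      then show ?thesis using x 2 \<chi> bin_surj[of bs]
        by (intro exI[of _ "bval (True # bs)"] exI[of _ x']) (simp add: num_dig dig_def tok_Suc0 tok_def)
    qed
  qed
qed




lemma lemB: "Ot (Nd fl) x = enc_aform \<psi> @ r \<Longrightarrow>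
   \<exists>\<phi> x'. x = enc_ltl \<phi> @ x' \<and> \<psi> = trf fl \<phi> \<and> r = Ot (Nd True) x'"
proof (induction "length x" arbitrary: x fl \<psi> r rule: less_induct)
  case less
  consider "x = []" | "x \<noteq> [] \<and> length x < 4" | "4 \<le> length x" by linarith
  then show ?case
  proof cases
    case 1 then show ?thesis using less.prems by simp
  next
    case 2 then show ?thesis using less.prems Ot_short dec15' by metis
  next
    case 3
    then obtain k rest where k: "k < 16" and x: "x = tok k @ rest" and lr: "length rest < length x"
      using split_tok by blast
    have O: "Ot (Nd fl) x = (case act (Nd fl) k of None \<Rightarrow> tok 15 | Some (h, c') \<Rightarrow> h @ Ot c' rest)"
      using Ot_tok[OF k] x by simp
    show ?thesis
    proof (cases "2 \<le> k \<and> k \<le> 11")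
      case False
      then have "act (Nd fl) k = None" by simp
      then show ?thesis using O less.prems dec15' by simp
    next
      case True
      then have "enc_aform \<psi> @ r = gl fl @ ch k @ Ot (if k = 2 then D0 else Nd False) rest"
        using O less.prems by simp
      from dec_gl[OF this] obtain \<psi>' where \<psi>: "\<psi> = (if fl then GR \<psi>' else \<psi>')"
        and E: "enc_aform \<psi>' @ r = ch k @ Ot (if k = 2 then D0 else Nd False) rest" by blast
      have IH1: "\<And>fl a r. Ot (Nd fl) rest = enc_aform a @ r \<Longrightarrow>
          \<exists>\<phi> x'. rest = enc_ltl \<phi> @ x' \<and> a = trf fl \<phi> \<and> r = Ot (Nd True) x'"
        using less.hyps lr by blast
      have IH2: "\<And>a b. Ot (Nd False) rest = enc_aform a @ enc_aform b @ r \<Longrightarrow>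
          \<exists>\<phi>1 \<phi>2 x'. rest = enc_ltl \<phi>1 @ enc_ltl \<phi>2 @ x' \<and> a = tr0 \<phi>1 \<and> b = GR (tr0 \<phi>2) \<and> r = Ot (Nd True) x'"
      proof -
        fix a b assume h: "Ot (Nd False) rest = enc_aform a @ enc_aform b @ r"
        from IH1[OF h] obtain \<phi>1 x2 where
          r1: "rest = enc_ltl \<phi>1 @ x2" "a = trf False \<phi>1" "enc_aform b @ r = Ot (Nd True) x2" by auto
        have "length x2 < length x" using r1(1) lr by simp
        from less.hyps[OF this r1(3)[symmetric]] obtain \<phi>2 x' where
          "x2 = enc_ltl \<phi>2 @ x'" "b = trf True \<phi>2" "r = Ot (Nd True) x'" by blast
        then show "\<exists>\<phi>1 \<phi>2 x'. rest = enc_ltl \<phi>1 @ enc_ltl \<phi>2 @ x' \<and> a = tr0 \<phi>1 \<and> b = GR (tr0 \<phi>2) \<and> r = Ot (Nd True) x'"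
          using r1 by (auto simp: trf_def)
      qed
      have kc: "k = 2 \<or> k = 3 \<or> k = 4 \<or> k = 5 \<or> k = 6 \<or> k = 7 \<or> k = 8 \<or> k = 9 \<or> k = 10 \<or> k = 11"
        using c211[of k] True by blast
      have main: "\<exists>\<phi> x'. x = enc_ltl \<phi> @ x' \<and> \<psi>' = tr0 \<phi> \<and> r = Ot (Nd True) x'"
        using kc
      proof (elim disjE)
        assume k2: "k = 2"
        from dec_ch2[OF E[unfolded k2, simplified ch_def, simplified]] obtain a where
          \<psi>': "\<psi>' = AEx1 4 (AAnd Ez a)" and a: "enc_aform a @ r = Ot D0 rest" by auto
        from lemB_D0[OF a[symmetric]] obtain p x' where "rest = num p @ x'" "a = Chain (bin p)" "r = Ot (Nd True) x'"
          by blast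
        then show ?thesis using x k2 \<psi>' by (intro exI[of _ "Prop p"] exI[of _ x']) simp
      next
        assume k3: "k = 3"
        from dec_ch3[OF E[unfolded k3, simplified ch_def, simplified]] obtain a where
          \<psi>': "\<psi>' = AAll2 0 2 (imp (mem3 0 0) (AEx3 0 [2] (AAnd (Single 0 0) (ANot a))))"
          and a: "enc_aform a @ r = Ot (Nd False) rest" by auto
        from IH1[OF a[symmetric]] obtain \<phi> x' where "rest = enc_ltl \<phi> @ x'" "a = trf False \<phi>" "r = Ot (Nd True) x'"
          by blast
        then show ?thesis using x k3 \<psi>' by (intro exI[of _ "Neg \<phi>"] exI[of _ x']) (simp add: trf_def)
      next
        assume k4: "k = 4"
        from dec_ch4[OF E[unfolded k4, simplified ch_def, simplified]] obtain a b where
          \<psi>': "\<psi>' = AEx3 2 [2] (AAnd (Eq3 2 0) (AAnd a b))"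
          and a: "enc_aform a @ enc_aform b @ r = Ot (Nd False) rest" by auto
        from IH2[OF a[symmetric]] obtain \<phi>1 \<phi>2 x' where
          "rest = enc_ltl \<phi>1 @ enc_ltl \<phi>2 @ x'" "a = tr0 \<phi>1" "b = GR (tr0 \<phi>2)" "r = Ot (Nd True) x'" by blast
        then show ?thesis using x k4 \<psi>' by (intro exI[of _ "Conj \<phi>1 \<phi>2"] exI[of _ x']) simp
      next
        assume k5: "k = 5"
        from dec_ch5[OF E[unfolded k5, simplified ch_def, simplified]] obtain a b where
          \<psi>': "\<psi>' = AEx3 1 [2] (AEx3 2 [2] (AAnd (Union3 0 1 2) (AAnd (sel1 a) b)))"
          and a: "enc_aform a @ enc_aform b @ r = Ot (Nd False) rest" by auto
        from IH2[OF a[symmetric]] obtain \<phi>1 \<phi>2 x' where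
          "rest = enc_ltl \<phi>1 @ enc_ltl \<phi>2 @ x'" "a = tr0 \<phi>1" "b = GR (tr0 \<phi>2)" "r = Ot (Nd True) x'" by blast
        then show ?thesis using x k5 \<psi>' by (intro exI[of _ "Disj \<phi>1 \<phi>2"] exI[of _ x']) simp
      next
        assume k6: "k = 6"
        from dec_ch6[OF E[unfolded k6, simplified ch_def, simplified]] obtain a where
          \<psi>': "\<psi>' = AEx3 1 [2] (AAnd (Suff 1 0 TOne) (sel1 a))"
          and a: "enc_aform a @ r = Ot (Nd False) rest" by auto
        from IH1[OF a[symmetric]] obtain \<phi> x' where "rest = enc_ltl \<phi> @ x'" "a = trf False \<phi>" "r = Ot (Nd True) x'"
          by blast
        then show ?thesis using x k6 \<psi>' by (intro exI[of _ "Next \<phi>"] exI[of _ x']) (simp add: trf_def)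
      next
        assume k7: "k = 7"
        from dec_ch7[OF E[unfolded k7, simplified ch_def, simplified]] obtain a where
          \<psi>': "\<psi>' = AEx1 0 (AEx3 1 [2] (AAnd (Suff 1 0 (TVar 0)) (sel1 a)))"
          and a: "enc_aform a @ r = Ot (Nd False) rest" by auto
        from IH1[OF a[symmetric]] obtain \<phi> x' where "rest = enc_ltl \<phi> @ x'" "a = trf False \<phi>" "r = Ot (Nd True) x'"
          by blast
        then show ?thesis using x k7 \<psi>' by (intro exI[of _ "Fut \<phi>"] exI[of _ x']) (simp add: trf_def)
      next
        assume k8: "k = 8"
        from dec_ch8[OF E[unfolded k8, simplified ch_def, simplified]] obtain a where
          \<psi>': "\<psi>' = AAll1 0 (AEx3 1 [2] (AAnd (Suff 1 0 (TVar 0)) (sel1 a)))"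
          and a: "enc_aform a @ r = Ot (Nd False) rest" by auto
        from IH1[OF a[symmetric]] obtain \<phi> x' where "rest = enc_ltl \<phi> @ x'" "a = trf False \<phi>" "r = Ot (Nd True) x'"
          by blast
        then show ?thesis using x k8 \<psi>' by (intro exI[of _ "Glob \<phi>"] exI[of _ x']) (simp add: trf_def)
      next
        assume k9: "k = 9"
        from dec_ch9[OF E[unfolded k9, simplified ch_def, simplified]] obtain a b where
          \<psi>': "\<psi>' = AEx1 0 (AEx3 2 [2] (AAnd (Suff 2 0 (TVar 0))
             (AAnd (AAll1 1 (AOr Le01 (AEx3 1 [2] (AAnd (Suff 1 0 (TVar 1)) (sel1 a))))) b)))"
          and a: "enc_aform a @ enc_aform b @ r = Ot (Nd False) rest" by auto
        from IH2[OF a[symmetric]] obtain \<phi>1 \<phi>2 x' where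
          "rest = enc_ltl \<phi>1 @ enc_ltl \<phi>2 @ x'" "a = tr0 \<phi>1" "b = GR (tr0 \<phi>2)" "r = Ot (Nd True) x'" by blast
        then show ?thesis using x k9 \<psi>' by (intro exI[of _ "Until \<phi>1 \<phi>2"] exI[of _ x']) simp
      next
        assume k10: "k = 10"
        from dec_ch10[OF E[unfolded k10, simplified ch_def, simplified]] obtain a b where
          \<psi>': "\<psi>' = AAll1 0 (AEx3 2 [2] (AAnd (Suff 2 0 (TVar 0))
             (AOr (AEx1 1 (AAnd (ANot Le01) (AEx3 1 [2] (AAnd (Suff 1 0 (TVar 1)) (sel1 a))))) b)))"
          and a: "enc_aform a @ enc_aform b @ r = Ot (Nd False) rest" by auto
        from IH2[OF a[symmetric]] obtain \<phi>1 \<phi>2 x' where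
          "rest = enc_ltl \<phi>1 @ enc_ltl \<phi>2 @ x'" "a = tr0 \<phi>1" "b = GR (tr0 \<phi>2)" "r = Ot (Nd True) x'" by blast
        then show ?thesis using x k10 \<psi>' by (intro exI[of _ "Rel \<phi>1 \<phi>2"] exI[of _ x']) simp
      next
        assume k11: "k = 11"
        from dec_ch11[OF E[unfolded k11, simplified ch_def, simplified]] obtain a where
          \<psi>': "\<psi>' = ANot a" and a: "enc_aform a @ r = Ot (Nd False) rest" by auto
        from IH1[OF a[symmetric]] obtain \<phi> x' where "rest = enc_ltl \<phi> @ x'" "a = trf False \<phi>" "r = Ot (Nd True) x'"
          by blast
        then show ?thesis using x k11 \<psi>' by (intro exI[of _ "BNeg \<phi>"] exI[of _ x']) (simp add: trf_def)
      qed
      then show ?thesis using \<psi> by (auto simp: trf_def)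
    qed
  qed
qed




primrec lcode :: "bool list \<Rightarrow> nat" where
  "lcode [] = 0"
| "lcode (b # bs) = 1 + (if b then 1 else 0) + 2 * lcode bs"

fun ldec :: "nat \<Rightarrow> bool list" where
  "ldec n = (if n = 0 then [] else odd (n - 1) # ldec ((n - 1) div 2))"
declare ldec.simps[simp del]

lemma ldec_lcode[simp]: "ldec (lcode bs) = bs"
  by (induction bs) (subst ldec.simps; auto)+

lemma lcode_ldec[simp]: "lcode (ldec n) = n"
proof (induction n rule: ldec.induct)
  case (1 n) then show ?case by (subst ldec.simps) auto
qed

lemma lcode_bound2: "lcode bs + 2 \<le> 2 ^ (length bs + 1)"
proof (induction bs)
  case (Cons b bs)
  have h: "lcode (b # bs) + 2 \<le> 2 * (lcode bs + 2)" by simp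
  have e: "(2::nat) ^ (length (b # bs) + 1) = 2 * 2 ^ (length bs + 1)" by simp
  show ?case using Cons.IH by (cases b) auto
qed simp

lemma lcode_bound: "lcode bs < 2 ^ (length bs + 1)"
  using lcode_bound2[of bs] by linarith

lemma lcode_mono: "length bs \<le> L \<Longrightarrow> lcode bs < 2 ^ (L + 1)"
  using lcode_bound[of bs] by (meson le_less_trans lcode_bound one_less_numeral_iff power_increasing_iff semiring_norm(76) add_le_cancel_right less_le_trans)

lemma lcode_len3: "length bs \<le> 3 \<Longrightarrow> lcode bs < 16"
  using lcode_mono[of bs 3] by simp

fun cxcode :: "cx \<Rightarrow> nat" where
  "cxcode (Nd False) = 0" | "cxcode (Nd True) = 1" | "cxcode D0 = 2" | "cxcode DZ = 3" | "cxcode DM = 4"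

definition cxdec :: "nat \<Rightarrow> cx" where
  "cxdec n = (if n = 0 then Nd False else if n = 1 then Nd True else if n = 2 then D0 else if n = 3 then DZ else DM)"

lemma cxdec_code[simp]: "cxdec (cxcode c) = c"
  by (cases c rule: cxcode.cases) (auto simp: cxdec_def)
lemma cxcode_le: "cxcode c \<le> 4"
  by (cases c rule: cxcode.cases) auto

definition mcode :: "cx \<Rightarrow> bool list \<Rightarrow> nat" where
  "mcode c buf = 2 + 16 * cxcode c + lcode buf"

lemma mcode_lt: "length buf \<le> 3 \<Longrightarrow> mcode c buf < 82"
  using lcode_len3[of buf] cxcode_le[of c] unfolding mcode_def by linarith

lemma mcode_dec: assumes "length buf \<le> 3"
  shows "mcode c buf mod 82 = mcode c buf" "cxdec ((mcode c buf - 2) div 16) = c"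
    "ldec ((mcode c buf - 2) mod 16) = buf" "\<not> mcode c buf < 2" "mcode c buf \<noteq> 1"
proof -
  have l: "lcode buf < 16" using lcode_len3[OF assms] .
  show "mcode c buf mod 82 = mcode c buf" using mcode_lt[OF assms] by simp
  have "(mcode c buf - 2) div 16 = cxcode c" "(mcode c buf - 2) mod 16 = lcode buf"
    using l unfolding mcode_def by simp_all
  then show "cxdec ((mcode c buf - 2) div 16) = c" "ldec ((mcode c buf - 2) mod 16) = buf" by simp_all
  show "\<not> mcode c buf < 2" "mcode c buf \<noteq> 1" by (simp_all add: mcode_def)
qed

definition dlt :: "bool list \<Rightarrow> nat \<Rightarrow> bool option \<Rightarrow> nat list \<Rightarrow> nat \<times> int \<times> (nat \<times> int) list \<times> bool option" where
  "dlt P q a ss = (let m = q mod 82; pend = ldec (q div 82) in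
     if pend \<noteq> [] then (m + 82 * lcode (tl pend), 0, [], Some (hd pend))
     else if m = 1 then (mcode (Nd False) [] + 82 * lcode P, 1, [], None)
     else if m < 2 then (0, 0, [], None)
     else (let c = cxdec ((m - 2) div 16); buf = ldec ((m - 2) mod 16) in
       case a of None \<Rightarrow> (if buf = [] then 0 else 82 * lcode (tok 15), 0, [], None)
       | Some b \<Rightarrow> if length buf < 3 then (mcode c (buf @ [b]), 1, [], None)
           else (case act c (bval (buf @ [b])) of None \<Rightarrow> (82 * lcode (tok 15), 1, [], None)
                 | Some (h, c') \<Rightarrow> (mcode c' [] + 82 * lcode h, 1, [], None))))"

definition Lch :: nat where
  "Lch = length GRc + (\<Sum>k\<in>{2..11}. length (ch k)) + length (digc True) + length (digc False)
     + length (enc_aform Leaf) + 4"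

lemma act_len: "act c k = Some (h, c') \<Longrightarrow> length h \<le> Lch"
proof (cases c)
  case (Nd fl)
  assume a: "act c k = Some (h, c')"
  then have k: "2 \<le> k" "k \<le> 11" and h: "h = gl fl @ ch k" using Nd by (auto split: if_splits)
  have "length (ch k) \<le> (\<Sum>k\<in>{2..11}. length (ch k))"
    by (rule member_le_sum) (use k in auto)
  then show ?thesis using h by (auto simp: Lch_def gl_def)
qed (auto simp: Lch_def split: if_splits)

definition Mach :: "bool list \<Rightarrow> tm" where
  "Mach P = \<lparr>nstates = 82 * 2 ^ (length P + Lch + 1), nsyms = 1, ntapes = 0, delta = dlt P, start = 1, halt = 0\<rparr>"

lemma wf_Mach: "wf_tm (Mach P)"
proof -
  let ?L = "length P + Lch"
  let ?N = "82 * 2 ^ (?L + 1)"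
  have pos: "(82::nat) \<le> ?N" by simp
  have bnd: "length bs \<le> ?L \<Longrightarrow> m < 82 \<Longrightarrow> m + 82 * lcode bs < ?N" for bs m
  proof -
    assume "length bs \<le> ?L" "m < 82"
    then have "lcode bs + 1 \<le> 2 ^ (?L + 1)" using lcode_mono[of bs ?L] by simp
    then have "82 * (lcode bs + 1) \<le> ?N" by simp
    with \<open>m < 82\<close> show ?thesis by simp
  qed
  have L4: "4 \<le> Lch" by (simp add: Lch_def)
  have H: "fst (dlt P q a ss) < ?N \<and> fst (snd (dlt P q a ss)) \<in> {-1, 0, 1} \<and> fst (snd (snd (dlt P q a ss))) = []"
    if q: "q < ?N" for q a ss
  proof -
    define m where "m = q mod 82"
    define pend where "pend = ldec (q div 82)"
    have m82: "m < 82" by (simp add: m_def)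
    show ?thesis
    proof (cases "pend \<noteq> []")
      case True
      have "lcode (tl pend) < lcode pend" using True by (cases pend) auto
      then have "lcode (tl pend) < q div 82" by (simp add: pend_def)
      then have "m + 82 * lcode (tl pend) < q" unfolding m_def by (metis div_mod_decomp mult_less_cancel1 add_less_cancel_left zero_less_numeral less_le_trans add.commute mult.commute nat_add_left_cancel_less)
      then show ?thesis using True q unfolding dlt_def Let_def m_def[symmetric] pend_def[symmetric] by simp
    next
      case False
      note F = False
      show ?thesis
      proof (cases "m = 1")
        case True
        have "mcode (Nd False) [] + 82 * lcode P < ?N" by (rule bnd) (auto simp: mcode_def)
        then show ?thesis using F True unfolding dlt_def Let_def m_def[symmetric] pend_def[symmetric] by simp
      next
        case False
        show ?thesis
        proof (cases "m < 2")
          case True then show ?thesis using F False pos unfolding dlt_def Let_def m_def[symmetric] pend_def[symmetric] by simp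
        next
          case m2: False
          define c where "c = cxdec ((m - 2) div 16)"
          define buf where "buf = ldec ((m - 2) mod 16)"
          have t15: "82 * lcode (tok 15) < ?N" using bnd[of "tok 15" 0] L4 by simp
          have r: "dlt P q a ss = (case a of None \<Rightarrow> (if buf = [] then 0 else 82 * lcode (tok 15), 0, [], None)
             | Some b \<Rightarrow> if length buf < 3 then (mcode c (buf @ [b]), 1, [], None)
               else (case act c (bval (buf @ [b])) of None \<Rightarrow> (82 * lcode (tok 15), 1, [], None)
                 | Some (h, c') \<Rightarrow> (mcode c' [] + 82 * lcode h, 1, [], None)))"
            using F False m2 unfolding dlt_def Let_def m_def[symmetric] pend_def[symmetric] c_def[symmetric] buf_def[symmetric]
            by simp
          show ?thesis
          proof (cases a)
            case None then show ?thesis using r t15 pos by auto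
          next
            case (Some b)
            note Sa = Some
            show ?thesis
            proof (cases "length buf < 3")
              case True
              then have "mcode c (buf @ [b]) < 82" by (intro mcode_lt) simp
              then have "mcode c (buf @ [b]) < ?N" using pos by linarith
              then show ?thesis using r Sa True by simp
            next
              case False
              show ?thesis
              proof (cases "act c (bval (buf @ [b]))")
                case None then show ?thesis using r Sa False t15 by simp
              next
                case (Some hc)
                note Some2 = Some
                obtain h c' where hc: "hc = (h, c')" by (cases hc)
                have "length h \<le> ?L" using act_len[of c _ h c'] Some2 hc by fastforce
                moreover have "mcode c' [] < 82" by (intro mcode_lt) simp
                ultimately have "mcode c' [] + 82 * lcode h < ?N" by (intro bnd)
                then show ?thesis using r Sa False Some2 hc by simp
              qed
            qed
          qed
        qed
      qed
    qed
  qed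
  have N1: "(1::nat) < ?N" using pos by linarith
  have W: "q < ?N \<Longrightarrow> (case dlt P q a ss of (q', di, ws, ob) \<Rightarrow>
           q' < ?N \<and> di \<in> {-1, 0, 1} \<and> length ws = 0 \<and>
           (\<forall>(s, d)\<in>set ws. s < 1 \<and> d \<in> {-1, 0, 1}))" for q a ss
    using H[of q a ss] by (cases "dlt P q a ss") auto
  show ?thesis
    unfolding wf_tm_def Mach_def tm.simps
  proof (intro conjI allI impI)
    fix q :: nat and a and ss :: "nat list" assume h: "q < ?N \<and> q \<noteq> 0 \<and> length ss = 0 \<and> (\<forall>s\<in>set ss. s < 1)"
    show "case dlt P q a ss of (q', di, ws, ob) \<Rightarrow>
           q' < ?N \<and> di \<in> {-1, 0, 1} \<and> length ws = 0 \<and>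
           (\<forall>(s, d)\<in>set ws. s < 1 \<and> d \<in> {-1, 0, 1})" by (rule W) (use h in simp)
  qed (use N1 in simp_all)
qed




definition cfg :: "nat \<Rightarrow> nat \<Rightarrow> bool list \<Rightarrow> conf" where
  "cfg q p out = \<lparr>st = q, ipos = p, wt = [], wpos = [], outp = out\<rparr>"

lemma Mach_simps[simp]: "delta (Mach P) = dlt P" "halt (Mach P) = 0" "start (Mach P) = 1" "ntapes (Mach P) = 0"
  by (simp_all add: Mach_def)

lemma init_cfg: "init_conf (Mach P) = cfg 1 0 []"
  by (simp add: init_conf_def cfg_def)

lemma step_cfg:
  assumes "q \<noteq> 0" "dlt P q (inp_sym x p) [] = (q', di, ws, ob)"
  shows "step (Mach P) x (cfg q p out) =
     cfg q' (min (length x + 1) (nat (int p + di))) (out @ (case ob of None \<Rightarrow> [] | Some b \<Rightarrow> [b]))"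
  using assms by (simp add: step_def cfg_def)

lemma step_cfg2: "q \<noteq> 0 \<Longrightarrow> step (Mach P) x (cfg q p out) =
   (case dlt P q (inp_sym x p) [] of (q', di, ws, ob) \<Rightarrow>
     cfg q' (min (length x + 1) (nat (int p + di))) (out @ (case ob of None \<Rightarrow> [] | Some b \<Rightarrow> [b])))"
  by (simp add: step_def cfg_def split: prod.split)

lemma dlt_pend: "m < 82 \<Longrightarrow> dlt P (m + 82 * lcode (b # bs)) a ss = (m + 82 * lcode bs, 0, [], Some b)"
proof -
  assume m: "m < 82"
  have e1: "(m + 82 * lcode (b # bs)) mod 82 = m" and e2: "(m + 82 * lcode (b # bs)) div 82 = lcode (b # bs)"
    using m by (simp_all del: lcode.simps)
  show ?thesis unfolding dlt_def Let_def e1 e2 ldec_lcode by simp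
qed

lemma emit: "p \<le> length x + 1 \<Longrightarrow> m < 82 \<Longrightarrow>
  (step (Mach P) x ^^ length bs) (cfg (m + 82 * lcode bs) p out) = cfg m p (out @ bs)"
proof (induction bs arbitrary: out)
  case Nil then show ?case by simp
next
  case (Cons b bs)
  have "step (Mach P) x (cfg (m + 82 * lcode (b # bs)) p out) = cfg (m + 82 * lcode bs) p (out @ [b])"
    using Cons.prems by (subst step_cfg[OF _ dlt_pend]) auto
  then show ?case using Cons by (simp add: funpow_Suc_right del: funpow.simps)
qed

lemma dlt_mode: "length buf \<le> 3 \<Longrightarrow> dlt P (mcode c buf) a ss =
   (case a of None \<Rightarrow> (if buf = [] then 0 else 82 * lcode (tok 15), 0, [], None)
       | Some b \<Rightarrow> if length buf < 3 then (mcode c (buf @ [b]), 1, [], None)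
           else (case act c (bval (buf @ [b])) of None \<Rightarrow> (82 * lcode (tok 15), 1, [], None)
                 | Some (h, c') \<Rightarrow> (mcode c' [] + 82 * lcode h, 1, [], None)))"
proof -
  assume l: "length buf \<le> 3"
  have d: "mcode c buf div 82 = 0" using mcode_lt[OF l] by simp
  have e: "ldec 0 = []" by (subst ldec.simps) simp
  note m = mcode_dec[OF l]
  show ?thesis unfolding dlt_def Let_def d e m(1) m(2) m(3) using m(4) m(5) by simp
qed

lemma mcode_ne0: "mcode c buf \<noteq> 0" by (simp add: mcode_def)

lemma inp_some: "1 \<le> p \<Longrightarrow> p \<le> length x \<Longrightarrow> inp_sym x p = Some (x ! (p - 1))"
  by (simp add: inp_sym_def)
lemma inp_none: "inp_sym x (length x + 1) = None"
  by (simp add: inp_sym_def)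
lemma inp_none'[simp]: "inp_sym x (Suc (length x)) = None"
  by (simp add: inp_sym_def)

lemma read1: "1 \<le> p \<Longrightarrow> p \<le> length x \<Longrightarrow> length buf < 3 \<Longrightarrow>
  step (Mach P) x (cfg (mcode c buf) p out) = cfg (mcode c (buf @ [x ! (p - 1)])) (p + 1) out"
  by (simp add: step_cfg2 mcode_ne0 dlt_mode inp_some nat_add_distrib)

lemma read_last: "1 \<le> p \<Longrightarrow> p \<le> length x \<Longrightarrow> length buf = 3 \<Longrightarrow>
  step (Mach P) x (cfg (mcode c buf) p out) =
    (case act c (bval (buf @ [x ! (p - 1)])) of None \<Rightarrow> cfg (82 * lcode (tok 15)) (p + 1) out
     | Some (h, c') \<Rightarrow> cfg (mcode c' [] + 82 * lcode h) (p + 1) out)"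
  by (simp add: step_cfg2 mcode_ne0 dlt_mode inp_some nat_add_distrib split: option.split)

lemma read_end: "length buf \<le> 3 \<Longrightarrow>
  step (Mach P) x (cfg (mcode c buf) (length x + 1) out) =
    cfg (if buf = [] then 0 else 82 * lcode (tok 15)) (length x + 1) out"
  by (simp add: step_cfg2 mcode_ne0 dlt_mode)

lemma readn: "length buf + length bs \<le> 3 \<Longrightarrow> 1 \<le> p \<Longrightarrow> p + length bs \<le> length x + 1 \<Longrightarrow>
  bs = take (length bs) (drop (p - 1) x) \<Longrightarrow>
  (step (Mach P) x ^^ length bs) (cfg (mcode c buf) p out) = cfg (mcode c (buf @ bs)) (p + length bs) out"
proof (induction bs arbitrary: buf p)
  case Nil then show ?case by simp
next
  case (Cons b bs)
  have px: "p \<le> length x" using Cons.prems by simp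
  have xb: "x ! (p - 1) = b"
    using Cons.prems(4) px Cons.prems(2) by (cases "drop (p - 1) x") (auto simp: nth_via_drop)
  have tl: "bs = take (length bs) (drop (Suc p - 1) x)"
    using Cons.prems(4) by (metis Cons_nth_drop_Suc One_nat_def Suc_pred diff_Suc_1 le_add_diff_inverse
        list.inject length_Cons nat_le_linear not_less_eq_eq px take_Suc_Cons Cons.prems(2) less_eq_Suc_le)
  have "step (Mach P) x (cfg (mcode c buf) p out) = cfg (mcode c (buf @ [b])) (p + 1) out"
    using read1[of p x buf P c out] Cons.prems px xb by simp
  moreover have "(step (Mach P) x ^^ length bs) (cfg (mcode c (buf @ [b])) (Suc p) out) =
     cfg (mcode c ((buf @ [b]) @ bs)) (Suc p + length bs) out"
    using Cons.IH[of "buf @ [b]" "Suc p"] Cons.prems tl by simp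
  ultimately show ?case by (simp add: funpow_Suc_right del: funpow.simps)
qed




lemma funpow_comp: "(f ^^ (a + b)) s = (f ^^ a) ((f ^^ b) s)"
  by (simp add: funpow_add)

lemma Ot_long: "4 \<le> length r \<Longrightarrow> Ot c r = (case act c (bval (take 4 r)) of None \<Rightarrow> tok 15
   | Some (h, c') \<Rightarrow> h @ Ot c' (drop 4 r))"
  by (subst Ot.simps) auto

lemma garbage: "p \<le> length x + 1 \<Longrightarrow>
  (step (Mach P) x ^^ 4) (cfg (82 * lcode (tok 15)) p out) = cfg 0 p (out @ tok 15)"
  using emit[where p=p and x=x and m=0 and P=P and bs="tok 15" and out=out] by simp

lemma sim: "1 \<le> p \<Longrightarrow> p \<le> length x + 1 \<Longrightarrow>
  \<exists>n p'. (step (Mach P) x ^^ n) (cfg (mcode c []) p out) = cfg 0 p' (out @ Ot c (drop (p - 1) x))"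
proof (induction "length x + 1 - p" arbitrary: p c out rule: less_induct)
  case less
  define r where "r = drop (p - 1) x"
  have lr: "length r = length x + 1 - p" using less.prems by (simp add: r_def)
  consider "r = []" | "r \<noteq> [] \<and> length r < 4" | "4 \<le> length r" by linarith
  then show ?case
  proof cases
    case 1
    then have p: "p = length x + 1" using lr less.prems by simp
    have "(step (Mach P) x ^^ 1) (cfg (mcode c []) p out) = cfg 0 p out"
      using read_end[of "[]" P x c out] p by simp
    then show ?thesis using 1 r_def by (metis append_Nil2 Ot_nil)
  next
    case 2
    have l3: "length r \<le> 3" using 2 by simp
    have pl: "p + length r = length x + 1" using lr less.prems 2 by simp
    have s1: "(step (Mach P) x ^^ length r) (cfg (mcode c []) p out) = cfg (mcode c r) (length x + 1) out"
      using readn[of "[]" r p x P c out] l3 pl less.prems by (simp add: r_def)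
    have s2: "(step (Mach P) x ^^ 1) (cfg (mcode c r) (length x + 1) out) = cfg (82 * lcode (tok 15)) (length x + 1) out"
      using read_end[OF l3, of P x c out] 2 by simp
    have s3: "(step (Mach P) x ^^ 4) (cfg (82 * lcode (tok 15)) (length x + 1) out) = cfg 0 (length x + 1) (out @ tok 15)"
      by (rule garbage) simp
    have "(step (Mach P) x ^^ (4 + (1 + length r))) (cfg (mcode c []) p out) = cfg 0 (length x + 1) (out @ tok 15)"
      unfolding funpow_comp s1 s2 s3 ..
    moreover have "Ot c r = tok 15" using 2 Ot_short by blast
    ultimately show ?thesis unfolding r_def by metis
  next
    case 3
    have px: "p + 3 \<le> length x" using lr less.prems 3 by simp
    have t3: "take 3 r = take (length (take 3 r)) (drop (p - 1) x)" using 3 by (simp add: r_def)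
    have s1: "(step (Mach P) x ^^ 3) (cfg (mcode c []) p out) = cfg (mcode c (take 3 r)) (p + 3) out"
      using readn[of "[]" "take 3 r" p x P c out] 3 px less.prems t3 by simp
    have xr: "x ! (p + 3 - 1) = r ! 3" using px less.prems by (simp add: r_def)
    have "take (Suc 3) r = take 3 r @ [r ! 3]" by (rule take_Suc_conv_app_nth) (use 3 in simp)
    then have tk: "take 3 r @ [r ! 3] = take 4 r" by simp
    have s2: "(step (Mach P) x ^^ 1) (cfg (mcode c (take 3 r)) (p + 3) out) =
      (case act c (bval (take 4 r)) of None \<Rightarrow> cfg (82 * lcode (tok 15)) (p + 4) out
       | Some (h, c') \<Rightarrow> cfg (mcode c' [] + 82 * lcode h) (p + 4) out)"
    proof -
      have "step (Mach P) x (cfg (mcode c (take 3 r)) (p + 3) out) =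
        (case act c (bval (take 3 r @ [x ! (p + 3 - 1)])) of None \<Rightarrow> cfg (82 * lcode (tok 15)) (p + 3 + 1) out
         | Some (h, c') \<Rightarrow> cfg (mcode c' [] + 82 * lcode h) (p + 3 + 1) out)"
        by (rule read_last) (use px 3 in simp_all)
      moreover have eq: "p + 3 + 1 = p + 4" by simp
      ultimately show ?thesis unfolding xr tk eq by simp
    qed
    have O: "Ot c r = (case act c (bval (take 4 r)) of None \<Rightarrow> tok 15
       | Some (h, c') \<Rightarrow> h @ Ot c' (drop 4 r))" using Ot_long[OF 3] .
    show ?thesis
    proof (cases "act c (bval (take 4 r))")
      case None
      have s3: "(step (Mach P) x ^^ 4) (cfg (82 * lcode (tok 15)) (p + 4) out) = cfg 0 (p + 4) (out @ tok 15)"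
        by (rule garbage) (use px in simp)
      have "(step (Mach P) x ^^ (4 + (1 + 3))) (cfg (mcode c []) p out) = cfg 0 (p + 4) (out @ tok 15)"
        unfolding funpow_comp s1 s2 None using s3 by simp
      then show ?thesis using O None unfolding r_def by (metis option.simps(4))
    next
      case (Some hc)
      obtain h c' where hc: "hc = (h, c')" by (cases hc)
      have m: "mcode c' [] < 82" by (rule mcode_lt) simp
      have s3: "(step (Mach P) x ^^ length h) (cfg (mcode c' [] + 82 * lcode h) (p + 4) out) =
         cfg (mcode c' []) (p + 4) (out @ h)"
        by (rule emit) (use px m in simp_all)
      have "length x + 1 - (p + 4) < length x + 1 - p" using px by simp
      from less.hyps[OF this, of c' "out @ h"] px obtain n p' where
        s4: "(step (Mach P) x ^^ n) (cfg (mcode c' []) (p + 4) (out @ h)) =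
             cfg 0 p' ((out @ h) @ Ot c' (drop (p + 4 - 1) x))" by auto
      have dr: "drop (p + 4 - 1) x = drop 4 r" using less.prems by (simp add: r_def add.commute)
      have "(step (Mach P) x ^^ (n + (length h + (1 + 3)))) (cfg (mcode c []) p out) =
            cfg 0 p' (out @ h @ Ot c' (drop 4 r))"
        unfolding funpow_comp s1 s2 Some hc option.simps prod.simps s3 s4 dr by simp
      then show ?thesis using O Some hc unfolding r_def by auto
    qed
  qed
qed

lemma run_Mach: "\<exists>n. st (run (Mach P) x n) = halt (Mach P) \<and> outp (run (Mach P) x n) = P @ Ot (Nd False) x"
proof -
  have s0: "(step (Mach P) x ^^ 1) (cfg 1 0 []) = cfg (mcode (Nd False) [] + 82 * lcode P) 1 []"
    by (simp add: step_cfg2 dlt_def Let_def ldec.simps)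
  have m: "mcode (Nd False) [] < 82" by (rule mcode_lt) simp
  have s1: "(step (Mach P) x ^^ length P) (cfg (mcode (Nd False) [] + 82 * lcode P) 1 []) =
     cfg (mcode (Nd False) []) 1 P"
    using emit[where p=1 and x=x and m="mcode (Nd False) []" and P=P and bs=P and out="[]"] m by simp
  obtain n p' where s2: "(step (Mach P) x ^^ n) (cfg (mcode (Nd False) []) 1 P) = cfg 0 p' (P @ Ot (Nd False) x)"
    using sim[of 1 x P "Nd False" P] by auto
  have "run (Mach P) x (n + (length P + 1)) = cfg 0 p' (P @ Ot (Nd False) x)"
    unfolding run_def init_cfg funpow_comp s0 s1 s2 ..
  then show ?thesis by (intro exI[of _ "n + (length P + 1)"]) (simp add: cfg_def)
qed

lemma wpos_run: "wpos (run (Mach P) x n) = []"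
proof (induction n)
  case 0 then show ?case by (simp add: run_def init_conf_def)
next
  case (Suc n)
  have "run (Mach P) x (Suc n) = step (Mach P) x (run (Mach P) x n)" by (simp add: run_def)
  then show ?case using Suc by (simp add: step_def split: prod.split)
qed

lemma logspace_Mach: "logspace_computes (Mach P) (\<lambda>x. P @ Ot (Nd False) x)"
  unfolding logspace_computes_def using run_Mach wpos_run by auto




definition PS :: "bool list" where "PS = tok 13 @ num 0 @ enc_list num [2]"
definition PF :: "bool list" where "PF = tok 13 @ num 0 @ enc_list num [2] @ tok 7 @ enc_aform KT"

lemma enc_topS: "enc_aform (topS \<phi>) = PS @ enc_aform (tr0 \<phi>)"
  by (simp add: topS_def PS_def del: tr0.simps)
lemma enc_topF: "enc_aform (topF \<phi>) = PF @ enc_aform (tr0 \<phi>)"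
  by (simp add: topF_def PF_def del: tr0.simps)

lemma ch_ne: "ch k \<noteq> []"
  by (simp add: ch_def ch2_def ch3_def ch4_def ch5_def ch6_def ch7_def ch8_def ch9_def ch10_def ch11_def)

lemma act_ne: "act c k = Some (h, c') \<Longrightarrow> h \<noteq> []"
  by (cases c) (auto simp: ch_ne digc_def split: if_splits)

lemma Ot_empty: "Ot c x = [] \<Longrightarrow> x = []"
proof (rule ccontr)
  assume h: "Ot c x = []" and x: "x \<noteq> []"
  show False
  proof (cases "length x < 4")
    case True then show False using h x Ot_short by simp
  next
    case False
    then have "4 \<le> length x" by simp
    from Ot_long[OF this, of c] h show False
      by (cases "act c (bval (take 4 x))") (auto dest: act_ne simp: tok_def)
  qed
qed

lemma Ot_enc: "Ot (Nd False) (enc_ltl \<phi>) = enc_aform (tr0 \<phi>)"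
  using lemA[of False \<phi> "[]"] by (simp add: trf_def del: tr0.simps)

lemma red_S: "x \<in> enc_ltl ` LTL_SAT \<longleftrightarrow> PS @ Ot (Nd False) x \<in> enc_aform ` Delta30"
proof
  assume "x \<in> enc_ltl ` LTL_SAT"
  then obtain \<phi> where "x = enc_ltl \<phi>" "\<phi> \<in> LTL_SAT" by blast
  then have "PS @ Ot (Nd False) x = enc_aform (topS \<phi>)" "topS \<phi> \<in> Delta30"
    using topS_Delta by (simp_all add: Ot_enc enc_topS del: tr0.simps)
  then show "PS @ Ot (Nd False) x \<in> enc_aform ` Delta30" by (metis image_eqI)
next
  assume "PS @ Ot (Nd False) x \<in> enc_aform ` Delta30"
  then obtain \<psi> where \<psi>: "\<psi> \<in> Delta30" and e: "enc_aform \<psi> @ [] = PS @ Ot (Nd False) x" by auto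
  from dec13[of \<psi> "[]", THEN iffD1, OF e[unfolded PS_def append_assoc]]
  obtain a where \<psi>a: "\<psi> = AEx3 0 [2] a" and ea: "Ot (Nd False) x = enc_aform a @ []"
    by auto
  from lemB[OF ea] obtain \<phi> x' where "x = enc_ltl \<phi> @ x'" "a = trf False \<phi>" "[] = Ot (Nd True) x'" by blast
  moreover have "x' = []" using Ot_empty \<open>[] = Ot (Nd True) x'\<close> by metis
  ultimately have "x = enc_ltl \<phi>" "\<psi> = topS \<phi>" using \<psi>a by (auto simp: trf_def topS_def)
  then show "x \<in> enc_ltl ` LTL_SAT" using \<psi> topS_Delta by blast
qed

lemma red_F: "x \<in> enc_ltl ` LTL_FINSAT \<longleftrightarrow> PF @ Ot (Nd False) x \<in> enc_aform ` Delta30"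
proof
  assume "x \<in> enc_ltl ` LTL_FINSAT"
  then obtain \<phi> where "x = enc_ltl \<phi>" "\<phi> \<in> LTL_FINSAT" by blast
  then have "PF @ Ot (Nd False) x = enc_aform (topF \<phi>)" "topF \<phi> \<in> Delta30"
    using topF_Delta by (simp_all add: Ot_enc enc_topF del: tr0.simps)
  then show "PF @ Ot (Nd False) x \<in> enc_aform ` Delta30" by (metis image_eqI)
next
  assume "PF @ Ot (Nd False) x \<in> enc_aform ` Delta30"
  then obtain \<psi> where \<psi>: "\<psi> \<in> Delta30" and e: "enc_aform \<psi> @ [] = PF @ Ot (Nd False) x" by auto
  from dec13[of \<psi> "[]", THEN iffD1, OF e[unfolded PF_def append_assoc]]
  obtain a0 where \<psi>a0: "\<psi> = AEx3 0 [2] a0" and ea0: "enc_aform a0 @ [] = tok 7 @ enc_aform KT @ Ot (Nd False) x"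
    by auto
  from dec7[of a0 "[]", THEN iffD1, OF ea0] obtain b a where "a0 = AAnd b a"
    "enc_aform b @ enc_aform a @ [] = enc_aform KT @ Ot (Nd False) x" by blast
  then have \<psi>a: "\<psi> = AEx3 0 [2] (AAnd KT a)" and ea: "Ot (Nd False) x = enc_aform a @ []"
    using \<psi>a0 by auto
  from lemB[OF ea] obtain \<phi> x' where "x = enc_ltl \<phi> @ x'" "a = trf False \<phi>" "[] = Ot (Nd True) x'" by blast
  moreover have "x' = []" using Ot_empty \<open>[] = Ot (Nd True) x'\<close> by metis
  ultimately have "x = enc_ltl \<phi>" "\<psi> = topF \<phi>" using \<psi>a by (auto simp: trf_def topF_def)
  then show "x \<in> enc_ltl ` LTL_FINSAT" using \<psi> topF_Delta by blast
qed

theorem mainTheorem10: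
  shows "logspace_reducible (enc_ltl ` LTL_SAT) (enc_aform ` Delta30) \<and>
         logspace_reducible (enc_ltl ` LTL_FINSAT) (enc_aform ` Delta30)"
  unfolding logspace_reducible_def
  using wf_Mach logspace_Mach red_S red_F by blast



end
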